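(* Let $\bar t>0$, $I=(0,\bar t)$, let $\gamma_1,\gamma_2\in\mathrm{Lip}(I)$ (extended continuously to $\bar I$) with $\gamma_1<0<\gamma_2$ on $I$, $\gamma_1(0)=\gamma_1(\bar t)=\gamma_2(0)=\gamma_2(\bar t)=0$, $\gamma_1$ convex and $\gamma_2$ concave, and let $D=\{(y,t)\in\mathbb W: t\in I,\ \gamma_1(t)<y<\gamma_2(t)\}$. Let $\phi\in C(\partial D)$ with $\phi_1,\phi_2\in\mathrm{Lip}(I)$, and assume $\zeta<(\sqrt{721}-25)/48$. Let $u\in\mathrm{Lip}(D)$ be a function with $u=\phi$ on $\partial D$ and $S_u=R_\phi$. Then there exist an open set $D^r\subset\mathbb W$ and $u^r\in\mathrm{Lip}_{loc}(D^r)$ such that $S_u=S^r_{u^r}$.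
   Context: $\mathbb H$ is $\mathbb R^3$ with product $(x,y,t)\cdot(\xi,\eta,\tau)=(x+\xi,y+\eta,t+\tau+2(y\xi-x\eta))$; $X=\partial_x+2y\partial_t$, $Y=\partial_y-2x\partial_t$, $H_p=\mathrm{span}\{X(p),Y(p)\}$. $\mathbb W=\{x=0\}$ with coordinates $(y,t)$. Left intrinsic graph of $u:D\to\mathbb R$: $S_u=\{(u(y,t),y,t+2yu(y,t)):(y,t)\in D\}$. Right intrinsic graph of $v:D^r\to\mathbb R$: $S^r_v=\{(v(y,t),y,t-2yv(y,t)):(y,t)\in D^r\}$. Set $\phi_i(s)=\phi(\gamma_i(s),s)$, $\|\gamma\|_\infty=\max_i\|\gamma_i\|_\infty$, $\mathrm{Lip}(\gamma)=\max_i\mathrm{Lip}(\gamma_i)$, $\|\phi\|_\infty=\max_i\|\phi_i\|_\infty$, $\mathrm{Lip}(\phi)=\max_i\mathrm{Lip}(\phi_i)$, $\zeta=4(\|\gamma\|_\infty+\mathrm{Lip}(\gamma))(\|\phi\|_\infty+\mathrm{Lip}(\phi))$. Let $p_i(s)=(\phi_i(s),\gamma_i(s),s+2\gamma_i(s)\phi_i(s))$, $s\in\bar I$. When $\zeta<1$, for each $s\in\bar I$ there is a unique $\lambda(s)\in\bar I$ with $p_2(\lambda(s))-p_1(s)\in H_{p_1(s)}$ (equivalently $\lambda(s)-s+2(\gamma_2(\lambda(s))-\gamma_1(s))(\phi_2(\lambda(s))+\phi_1(s))=0$). Then $\rho(h,s)=(1-h)p_1(s)+h\,p_2(\lambda(s))$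 for $(h,s)\in Q=(0,1)\times I$, and $R_\phi:=\rho(Q)$ is the horizontally ruled surface spanned by $\phi$. *)

theory Defs
  imports "HOL-Analysis.Analysis"
begin

text \<open>Heisenberg group H = R^3 with coordinates (x,y,t); the vertical plane W = {x=0}
  with coordinates (y,t) is represented by real \<times> real.\<close>

definition horX :: "real \<times> real \<times> real \<Rightarrow> real \<times> real \<times> real" where
  "horX p = (case p of (x,y,t) \<Rightarrow> (1, 0, 2 * y))"

definition horY :: "real \<times> real \<times> real \<Rightarrow> real \<times> real \<times> real" where
  "horY p = (case p of (x,y,t) \<Rightarrow> (0, 1, - 2 * x))"

definition horizontal_plane :: "real \<times> real \<times> real \<Rightarrow> (real \<times> real \<times> real) set" where
  "horizontal_plane p = span {horX p, horY p}"

definition left_graph :: "(real \<times> real \<Rightarrow> real) \<Rightarrow> (real \<times> real) set \<Rightarrow> (real \<times> real \<times> real) set" where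
  "left_graph u D = (\<lambda>(y,t). (u (y,t), y, t + 2 * y * u (y,t))) ` D"

definition right_graph :: "(real \<times> real \<Rightarrow> real) \<Rightarrow> (real \<times> real) set \<Rightarrow> (real \<times> real \<times> real) set" where
  "right_graph v Dr = (\<lambda>(y,t). (v (y,t), y, t - 2 * y * v (y,t))) ` Dr"

definition sup_norm :: "(real \<Rightarrow> real) \<Rightarrow> real set \<Rightarrow> real" where
  "sup_norm f S = (SUP x\<in>S. \<bar>f x\<bar>)"

definition lip_const :: "(real \<Rightarrow> real) \<Rightarrow> real set \<Rightarrow> real" where
  "lip_const f S = (SUP pq\<in>{(x,y). x \<in> S \<and> y \<in> S \<and> x \<noteq> y}.
      \<bar>f (fst pq) - f (snd pq)\<bar> / \<bar>fst pq - snd pq\<bar>)"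

definition locally_lipschitz_on :: "('a::metric_space \<Rightarrow> 'b::metric_space) \<Rightarrow> 'a set \<Rightarrow> bool" where
  "locally_lipschitz_on f S \<longleftrightarrow>
     (\<forall>p\<in>S. \<exists>e>0. \<exists>L. L-lipschitz_on (ball p e \<inter> S) f)"

definition bdry_fun :: "(real \<times> real \<Rightarrow> real) \<Rightarrow> (real \<Rightarrow> real) \<Rightarrow> real \<Rightarrow> real" where
  "bdry_fun \<phi> \<gamma> s = \<phi> (\<gamma> s, s)"

definition zeta :: "real set \<Rightarrow> (real \<Rightarrow> real) \<Rightarrow> (real \<Rightarrow> real) \<Rightarrow> (real \<times> real \<Rightarrow> real) \<Rightarrow> real" where
  "zeta I \<gamma>1 \<gamma>2 \<phi> =
     4 * (max (sup_norm \<gamma>1 I) (sup_norm \<gamma>2 I) + max (lip_const \<gamma>1 I) (lip_const \<gamma>2 I))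
       * (max (sup_norm (bdry_fun \<phi> \<gamma>1) I) (sup_norm (bdry_fun \<phi> \<gamma>2) I)
          + max (lip_const (bdry_fun \<phi> \<gamma>1) I) (lip_const (bdry_fun \<phi> \<gamma>2) I))"

definition curve_pt :: "(real \<times> real \<Rightarrow> real) \<Rightarrow> (real \<Rightarrow> real) \<Rightarrow> real \<Rightarrow> real \<times> real \<times> real" where
  "curve_pt \<phi> \<gamma> s = (bdry_fun \<phi> \<gamma> s, \<gamma> s, s + 2 * \<gamma> s * bdry_fun \<phi> \<gamma> s)"

definition ruling_param :: "real \<Rightarrow> (real \<Rightarrow> real) \<Rightarrow> (real \<Rightarrow> real) \<Rightarrow> (real \<times> real \<Rightarrow> real) \<Rightarrow> real \<Rightarrow> real" where
  "ruling_param tbar \<gamma>1 \<gamma>2 \<phi> s =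
     (THE l. l \<in> {0..tbar} \<and>
        curve_pt \<phi> \<gamma>2 l - curve_pt \<phi> \<gamma>1 s \<in> horizontal_plane (curve_pt \<phi> \<gamma>1 s))"

definition ruling_map :: "real \<Rightarrow> (real \<Rightarrow> real) \<Rightarrow> (real \<Rightarrow> real) \<Rightarrow> (real \<times> real \<Rightarrow> real) \<Rightarrow> real \<times> real \<Rightarrow> real \<times> real \<times> real" where
  "ruling_map tbar \<gamma>1 \<gamma>2 \<phi> hs =
     (case hs of (h, s) \<Rightarrow>
        (1 - h) *\<^sub>R curve_pt \<phi> \<gamma>1 s + h *\<^sub>R curve_pt \<phi> \<gamma>2 (ruling_param tbar \<gamma>1 \<gamma>2 \<phi> s))"

definition ruled_surface :: "real \<Rightarrow> (real \<Rightarrow> real) \<Rightarrow> (real \<Rightarrow> real) \<Rightarrow> (real \<times> real \<Rightarrow> real) \<Rightarrow> (real \<times> real \<times> real) set" where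
  "ruled_surface tbar \<gamma>1 \<gamma>2 \<phi> = ruling_map tbar \<gamma>1 \<gamma>2 \<phi> ` ({0<..<1} \<times> {0<..<tbar})"

end

theory Submission
  imports Defs "HOL-Homology.Invariance_of_Domain"
begin


lemma abs_prod_le:
  fixes a b x y :: real
  assumes "\<bar>a\<bar> \<le> x" "\<bar>b\<bar> \<le> y" shows "\<bar>a * b\<bar> \<le> x * y"
  using assms by (simp add: abs_mult mult_mono')

lemma horiz_iff:
  "(a, b, c) \<in> horizontal_plane (x, y, t) \<longleftrightarrow> c = 2 * y * a - 2 * x * b"
proof -
  have "horizontal_plane (x,y,t) = span {(1,0,2*y), (0,1,-2*x)}"
    by (simp add: horizontal_plane_def horX_def horY_def)
  also have "\<dots> = {v. \<exists>k. v - k *\<^sub>R (1,0,2*y) \<in> range (\<lambda>j. j *\<^sub>R (0::real,1::real,-2*x))}"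
    by (simp add: span_insert span_singleton) blast
  finally have hp: "horizontal_plane (x, y, t) = {v. \<exists>k. v - (k, 0, k * (2 * y)) \<in> range (\<lambda>j. (0, j, - (j * (2 * x))))}"
    by simp
  show ?thesis
  proof
    assume "(a, b, c) \<in> horizontal_plane (x, y, t)"
    then obtain k j where "(a, b, c) - (k, 0, k * (2 * y)) = (0, j, - (j * (2 * x)))"
      unfolding hp by auto
    then show "c = 2 * y * a - 2 * x * b" by (auto simp: algebra_simps)
  next
    assume c: "c = 2 * y * a - 2 * x * b"
    have "(a, b, c) - (a, 0, a * (2 * y)) = (0, b, - (b * (2 * x)))" using c by (simp add: algebra_simps)
    then show "(a, b, c) \<in> horizontal_plane (x, y, t)" unfolding hp by blast
  qed
qed

lemma bound_lip_cont:
  fixes f :: "real \<Rightarrow> real"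
  assumes "\<forall>x\<in>S. \<forall>y\<in>S. \<bar>f x - f y\<bar> \<le> L * \<bar>x - y\<bar>" "0 \<le> L"
  shows "continuous_on S f"
proof (rule lipschitz_on_continuous_on)
  show "L-lipschitz_on S f"
    using assms by (intro lipschitz_onI) (auto simp: dist_real_def)
qed

lemma convex_le_max:
  fixes f :: "real \<Rightarrow> real"
  assumes "convex_on S f" "a \<in> S" "b \<in> S" "a \<le> r" "r \<le> b"
  shows "f r \<le> max (f a) (f b)"
proof (cases "a = b")
  case True then show ?thesis using assms by auto
next
  case False
  then have ab: "a < b" using assms by auto
  define u where "u = (b - r) / (b - a)"
  define v where "v = (r - a) / (b - a)"
  have u1: "0 \<le> u" "0 \<le> v" using ab assms
    by (auto simp: u_def v_def)
  have "u + v = ((b - r) + (r - a)) / (b - a)" unfolding u_def v_def by (rule add_divide_distrib[symmetric])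
  also have "\<dots> = (b - a) / (b - a)" by (rule arg_cong[where f="\<lambda>z. z / (b - a)"]) simp
  also have "\<dots> = 1" using ab by simp
  finally have u: "0 \<le> u" "0 \<le> v" "u + v = 1" using u1 by auto
  have "u * a + v * b = ((b - r) * a + (r - a) * b) / (b - a)"
    by (simp add: u_def v_def add_divide_distrib)
  also have "\<dots> = r" using ab by (simp add: field_simps)
  finally have r: "r = u * a + v * b" by simp
  have "f r \<le> u * f a + v * f b"
    using assms(1,2,3) u unfolding convex_on_def r by auto
  also have "\<dots> \<le> u * max (f a) (f b) + v * max (f a) (f b)"
    using u by (intro add_mono mult_left_mono) auto
  also have "\<dots> = max (f a) (f b)" using u(3) by (simp add: distrib_right[symmetric])
  finally show ?thesis .
qed

lemma concave_ge_min:
  fixes f :: "real \<Rightarrow> real"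
  assumes "concave_on S f" "a \<in> S" "b \<in> S" "a \<le> r" "r \<le> b"
  shows "min (f a) (f b) \<le> f r"
proof -
  have c: "convex_on S (\<lambda>x. - f x)" using assms(1) unfolding concave_on_def .
  have "- f r \<le> max (- f a) (- f b)" by (rule convex_le_max[OF c assms(2-5)])
  then show ?thesis by (simp add: max_def min_def split: if_splits)
qed

lemma loc_glob:
  fixes F :: "real \<Rightarrow> real" and J :: "real set"
  assumes conv: "\<And>a b r. a \<in> J \<Longrightarrow> b \<in> J \<Longrightarrow> a \<le> r \<Longrightarrow> r \<le> b \<Longrightarrow> r \<in> J"
    and loc: "\<And>s0. s0 \<in> J \<Longrightarrow> \<exists>d>0. \<forall>s1 s2. s1 \<in> J \<longrightarrow> s2 \<in> J \<longrightarrow> \<bar>s1 - s0\<bar> < d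
                 \<longrightarrow> \<bar>s2 - s0\<bar> < d \<longrightarrow> s1 \<le> s2 \<longrightarrow> F s1 \<le> F s2"
    and ab: "a \<in> J" "b \<in> J" "a \<le> b"
  shows "F a \<le> F b"
proof -
  have sub: "{a..b} \<subseteq> J"
  proof
    fix x assume "x \<in> {a..b}"
    then show "x \<in> J" using conv[OF ab(1,2)] by simp
  qed
  obtain d where d: "\<And>s0. s0 \<in> J \<Longrightarrow> d s0 > 0 \<and> (\<forall>s1 s2. s1 \<in> J \<longrightarrow> s2 \<in> J \<longrightarrow> \<bar>s1 - s0\<bar> < d s0
                 \<longrightarrow> \<bar>s2 - s0\<bar> < d s0 \<longrightarrow> s1 \<le> s2 \<longrightarrow> F s1 \<le> F s2)"
  proof -
    have "\<forall>s0\<in>J. \<exists>d>0. \<forall>s1 s2. s1 \<in> J \<longrightarrow> s2 \<in> J \<longrightarrow> \<bar>s1 - s0\<bar> < d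
                 \<longrightarrow> \<bar>s2 - s0\<bar> < d \<longrightarrow> s1 \<le> s2 \<longrightarrow> F s1 \<le> F s2" using loc by blast
    from bchoice[OF this] show ?thesis using that by blast
  qed
  have cov: "{a..b} \<subseteq> \<Union>((\<lambda>s0. ball s0 (d s0)) ` {a..b})"
  proof
    fix x assume x: "x \<in> {a..b}"
    have "x \<in> J" using x sub by blast
    then have "d x > 0" using d by blast
    then have "x \<in> ball x (d x)" by simp
    then show "x \<in> \<Union>((\<lambda>s0. ball s0 (d s0)) ` {a..b})" using x by blast
  qed
  have "\<exists>e>0. \<forall>x\<in>{a..b}. \<exists>G \<in> (\<lambda>s0. ball s0 (d s0)) ` {a..b}. ball x e \<subseteq> G"
  proof (rule Heine_Borel_lemma[OF compact_Icc cov])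
    show "\<And>G. G \<in> (\<lambda>s0. ball s0 (d s0)) ` {a..b} \<Longrightarrow> open G" by auto
  next
    fix e :: real assume "0 < e" "\<And>x. x \<in> {a..b} \<Longrightarrow> \<exists>G \<in> (\<lambda>s0. ball s0 (d s0)) ` {a..b}. ball x e \<subseteq> G"
    then show "\<exists>e>0. \<forall>x\<in>{a..b}. \<exists>G \<in> (\<lambda>s0. ball s0 (d s0)) ` {a..b}. ball x e \<subseteq> G" by blast
  qed
  then obtain e where e: "0 < e" "\<And>x. x \<in> {a..b} \<Longrightarrow> \<exists>G \<in> (\<lambda>s0. ball s0 (d s0)) ` {a..b}. ball x e \<subseteq> G"
    by blast
  have step: "F x \<le> F y" if xy: "x \<in> {a..b}" "y \<in> {a..b}" "x \<le> y" "y - x < e" for x y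
  proof -
    obtain s0 where s0: "s0 \<in> {a..b}" "ball x e \<subseteq> ball s0 (d s0)" using e(2)[OF xy(1)] by auto
    have "x \<in> ball x e" "y \<in> ball x e" using xy e(1) by (auto simp: dist_real_def)
    then have "x \<in> ball s0 (d s0)" "y \<in> ball s0 (d s0)" using s0(2) by blast+
    then have "\<bar>x - s0\<bar> < d s0" "\<bar>y - s0\<bar> < d s0" by (simp_all add: dist_real_def abs_minus_commute)
    moreover have "s0 \<in> J" "x \<in> J" "y \<in> J" using s0(1) xy(1,2) sub by auto
    ultimately show ?thesis using d[of s0] xy(3) by blast
  qed
  have ind: "\<forall>y\<in>{a..b}. y - a \<le> real n * (e/2) \<longrightarrow> F a \<le> F y" for n
  proof (induction n)
    case 0 then show ?case by auto
  next
    case (Suc n)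
    show ?case
    proof (intro ballI impI)
      fix y assume y: "y \<in> {a..b}" "y - a \<le> real (Suc n) * (e/2)"
      show "F a \<le> F y"
      proof (cases "y - a \<le> real n * (e/2)")
        case True then show ?thesis using Suc y by auto
      next
        case False
        define y' where "y' = max a (y - e/2)"
        have yy: "y' \<in> {a..b}" "y' \<le> y" "y - y' < e" using y e(1) by (auto simp: y'_def)
        have "y' - a \<le> real n * (e/2)"
        proof (cases "y - e/2 \<le> a")
          case True then show ?thesis using e(1) by (simp add: y'_def)
        next
          case False
          then have "y' = y - e/2" by (simp add: y'_def)
          moreover have "real (Suc n) * (e/2) = real n * (e/2) + e/2" by (simp add: algebra_simps)
          ultimately show ?thesis using y(2) by linarith
        qed
        then have "F a \<le> F y'" using Suc yy(1) by blast
        also have "F y' \<le> F y" using step[OF yy(1) y(1) yy(2,3)] .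
        finally show ?thesis .
      qed
    qed
  qed
  obtain n where "(b - a) / (e/2) \<le> real n" using real_arch_simple by blast
  then have "b - a \<le> real n * (e/2)" using e(1) by (simp add: field_simps)
  then show ?thesis using ind[of n] ab by auto
qed


lemma aux_lam:
  fixes a b :: real
  assumes "\<bar>a - b\<bar> \<le> (\<bar>a\<bar> + \<bar>b\<bar>) / 24" "b > 0"
  shows "a > 0" "\<bar>a\<bar> \<le> 2 * \<bar>b\<bar>"
proof -
  have bb: "\<bar>b\<bar> = b" using assms(2) by simp
  have dd: "(\<bar>a\<bar> + \<bar>b\<bar>) / 24 = \<bar>a\<bar> / 24 + \<bar>b\<bar> / 24" by (simp add: add_divide_distrib)
  show a: "a > 0"
  proof (rule ccontr)
    assume "\<not> a > 0"
    then have "\<bar>a\<bar> = - a" "\<bar>a - b\<bar> = b - a" using assms(2) by auto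
    then show False using assms bb dd by linarith
  qed
  have "\<bar>a\<bar> = a" using a by simp
  moreover have "a - b \<le> \<bar>a - b\<bar>" by simp
  ultimately show "\<bar>a\<bar> \<le> 2 * \<bar>b\<bar>" using assms bb dd by linarith
qed

lemma tri2:
  fixes a b M :: real
  assumes "\<bar>a\<bar> \<le> M" "\<bar>b\<bar> \<le> M"
  shows "\<bar>a + b\<bar> \<le> 2 * M" "\<bar>a - b\<bar> \<le> 2 * M"
  using assms by auto

locale rs =
  fixes tb :: real and g1 g2 :: "real \<Rightarrow> real" and \<phi> u :: "real \<times> real \<Rightarrow> real"
    and D :: "(real \<times> real) set" and Gm Lg Ph Lp L0 :: real
  assumes tb: "0 < tb"
    and sign: "\<forall>t\<in>{0<..<tb}. g1 t < 0 \<and> 0 < g2 t"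
    and ends: "g1 0 = 0" "g1 tb = 0" "g2 0 = 0" "g2 tb = 0"
    and cvx: "convex_on {0<..<tb} g1" and ccv: "concave_on {0<..<tb} g2"
    and Ddef: "D = {(y,t). t \<in> {0<..<tb} \<and> g1 t < y \<and> y < g2 t}"
    and g1L: "\<forall>x\<in>{0..tb}. \<forall>y\<in>{0..tb}. \<bar>g1 x - g1 y\<bar> \<le> Lg * \<bar>x - y\<bar>"
    and g2L: "\<forall>x\<in>{0..tb}. \<forall>y\<in>{0..tb}. \<bar>g2 x - g2 y\<bar> \<le> Lg * \<bar>x - y\<bar>"
    and g1B: "\<forall>x\<in>{0..tb}. \<bar>g1 x\<bar> \<le> Gm"
    and g2B: "\<forall>x\<in>{0..tb}. \<bar>g2 x\<bar> \<le> Gm"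
    and p1L: "\<forall>x\<in>{0..tb}. \<forall>y\<in>{0..tb}. \<bar>bdry_fun \<phi> g1 x - bdry_fun \<phi> g1 y\<bar> \<le> Lp * \<bar>x - y\<bar>"
    and p2L: "\<forall>x\<in>{0..tb}. \<forall>y\<in>{0..tb}. \<bar>bdry_fun \<phi> g2 x - bdry_fun \<phi> g2 y\<bar> \<le> Lp * \<bar>x - y\<bar>"
    and p1B: "\<forall>x\<in>{0..tb}. \<bar>bdry_fun \<phi> g1 x\<bar> \<le> Ph"
    and p2B: "\<forall>x\<in>{0..tb}. \<bar>bdry_fun \<phi> g2 x\<bar> \<le> Ph"
    and nn: "0 \<le> Gm" "0 \<le> Lg" "0 \<le> Ph" "0 \<le> Lp"
    and small: "(Gm + Lg) * (Ph + Lp) \<le> 1/96"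
    and uL: "L0-lipschitz_on D u"
    and graph: "left_graph u D = ruled_surface tb g1 g2 \<phi>"
begin

abbreviation "p1 \<equiv> bdry_fun \<phi> g1"
abbreviation "p2 \<equiv> bdry_fun \<phi> g2"

definition FF :: "real \<Rightarrow> real \<Rightarrow> real" where
  "FF l s = l - s + 2 * (g2 l - g1 s) * (p2 l + p1 s)"

lemma z: "Gm * Lp + Lg * Ph \<le> 1/96"
proof -
  have "(Gm + Lg) * (Ph + Lp) = Gm * Ph + Gm * Lp + Lg * Ph + Lg * Lp" by (simp add: algebra_simps)
  moreover have "0 \<le> Gm * Ph" "0 \<le> Lg * Lp" using nn by auto
  ultimately show ?thesis using small by linarith
qed

lemma z2: "Lg * Ph \<le> 1/96"
proof -
  have "0 \<le> Gm * Lp" using nn by auto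
  then show ?thesis using z by linarith
qed

lemma horiz_F:
  "curve_pt \<phi> g2 l - curve_pt \<phi> g1 s \<in> horizontal_plane (curve_pt \<phi> g1 s) \<longleftrightarrow> FF l s = 0"
proof -
  have "curve_pt \<phi> g2 l - curve_pt \<phi> g1 s \<in> horizontal_plane (curve_pt \<phi> g1 s) \<longleftrightarrow>
     (l + 2 * g2 l * p2 l - (s + 2 * g1 s * p1 s)) = 2 * g1 s * (p2 l - p1 s) - 2 * p1 s * (g2 l - g1 s)"
    by (simp add: curve_pt_def horiz_iff)
  also have "\<dots> \<longleftrightarrow> (l + 2 * g2 l * p2 l - (s + 2 * g1 s * p1 s)) - (2 * g1 s * (p2 l - p1 s) - 2 * p1 s * (g2 l - g1 s)) = 0"
    by linarith
  also have "(l + 2 * g2 l * p2 l - (s + 2 * g1 s * p1 s)) - (2 * g1 s * (p2 l - p1 s) - 2 * p1 s * (g2 l - g1 s)) = FF l s"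
    unfolding FF_def by (simp add: algebra_simps)
  finally show ?thesis .
qed

lemma F_mono:
  assumes "l1 \<in> {0..tb}" "l2 \<in> {0..tb}" "l1 < l2" "s \<in> {0..tb}"
  shows "FF l1 s < FF l2 s"
proof -
  define E1 where "E1 = (g2 l2 - g2 l1) * (p2 l2 + p1 s)"
  define E2 where "E2 = (g2 l1 - g1 s) * (p2 l2 - p2 l1)"
  define d where "d = l2 - l1"
  have id: "FF l2 s - FF l1 s = d + 2 * E1 + 2 * E2"
    unfolding FF_def E1_def E2_def d_def by (simp add: algebra_simps)
  have a1: "\<bar>g2 l2 - g2 l1\<bar> \<le> Lg * d" using g2L[rule_format, of l2 l1] assms unfolding d_def by auto
  have a2: "\<bar>p2 l2 + p1 s\<bar> \<le> 2 * Ph" using p2B[rule_format, of l2] p1B[rule_format, of s] assms by (intro tri2) auto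
  have a3: "\<bar>g2 l1 - g1 s\<bar> \<le> 2 * Gm" using g2B[rule_format, of l1] g1B[rule_format, of s] assms by (intro tri2) auto
  have a4: "\<bar>p2 l2 - p2 l1\<bar> \<le> Lp * d" using p2L[rule_format, of l2 l1] assms unfolding d_def by auto
  define a where "a = Lg * Ph * d"
  define b where "b = Gm * Lp * d"
  have "\<bar>E1\<bar> \<le> (Lg * d) * (2 * Ph)" unfolding E1_def by (rule abs_prod_le[OF a1 a2])
  also have "\<dots> = 2 * a" unfolding a_def by (simp add: algebra_simps)
  finally have e1: "\<bar>E1\<bar> \<le> 2 * a" .
  have "\<bar>E2\<bar> \<le> (2 * Gm) * (Lp * d)" unfolding E2_def by (rule abs_prod_le[OF a3 a4])
  also have "\<dots> = 2 * b" unfolding b_def by (simp add: algebra_simps)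
  finally have e2: "\<bar>E2\<bar> \<le> 2 * b" .
  have "(Gm * Lp + Lg * Ph) * d \<le> (1/96) * d"
    using z assms(3) unfolding d_def by (intro mult_right_mono) auto
  moreover have "(Gm * Lp + Lg * Ph) * d = a + b" unfolding a_def b_def by (simp add: algebra_simps)
  ultimately have ab: "a + b \<le> d / 96" by simp
  have "d > 0" using assms(3) unfolding d_def by auto
  then show ?thesis using id ab abs_le_D2[OF e1] abs_le_D2[OF e2] by linarith
qed

lemma F0: assumes "s \<in> {0<..<tb}" shows "FF 0 s < 0"
proof -
  define P where "P = (0 - g1 s) * (p2 0 + p1 s)"
  define a where "a = Lg * Ph * s"
  have a1: "\<bar>0 - g1 s\<bar> \<le> Lg * s" using g1L[rule_format, of s 0] ends assms tb by auto
  have a2: "\<bar>p2 0 + p1 s\<bar> \<le> 2 * Ph" using p2B[rule_format, of 0] p1B[rule_format, of s] assms tb by (intro tri2) auto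
  have "\<bar>P\<bar> \<le> (Lg * s) * (2 * Ph)" unfolding P_def by (rule abs_prod_le[OF a1 a2])
  also have "\<dots> = 2 * a" unfolding a_def by (simp add: algebra_simps)
  finally have e: "\<bar>P\<bar> \<le> 2 * a" .
  have "(Lg * Ph) * s \<le> (1/96) * s" using z nn assms by (intro mult_right_mono) (use z2 in auto)
  then have aa: "a \<le> s / 96" unfolding a_def by simp
  have fx: "FF 0 s = 2 * P - s" unfolding FF_def ends(3) P_def by (simp add: algebra_simps)
  have "0 < s" using assms by auto
  then show ?thesis using fx aa abs_le_D1[OF e] by linarith
qed

lemma Ftb: assumes "s \<in> {0<..<tb}" shows "FF tb s > 0"
proof -
  define d where "d = tb - s"
  define P where "P = (0 - g1 s) * (p2 tb + p1 s)"
  define a where "a = Lg * Ph * d"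
  have a1: "\<bar>0 - g1 s\<bar> \<le> Lg * d" using g1L[rule_format, of s tb] ends assms tb unfolding d_def by auto
  have a2: "\<bar>p2 tb + p1 s\<bar> \<le> 2 * Ph" using p2B[rule_format, of tb] p1B[rule_format, of s] assms tb by (intro tri2) auto
  have "\<bar>P\<bar> \<le> (Lg * d) * (2 * Ph)" unfolding P_def by (rule abs_prod_le[OF a1 a2])
  also have "\<dots> = 2 * a" unfolding a_def by (simp add: algebra_simps)
  finally have e: "\<bar>P\<bar> \<le> 2 * a" .
  have "(Lg * Ph) * d \<le> (1/96) * d" using z nn assms unfolding d_def by (intro mult_right_mono) (use z2 in auto)
  then have aa: "a \<le> d / 96" unfolding a_def by simp
  have fx: "FF tb s = d + 2 * P" unfolding FF_def ends(4) d_def P_def by (simp add: algebra_simps)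
  have "0 < d" using assms unfolding d_def by auto
  then show ?thesis using fx aa abs_le_D2[OF e] by linarith
qed

lemma g2_cont: "continuous_on {0..tb} g2" by (rule bound_lip_cont[OF g2L nn(2)])
lemma p2_cont: "continuous_on {0..tb} p2" by (rule bound_lip_cont[OF p2L nn(4)])

lemma F_cont: "continuous_on {0..tb} (\<lambda>l. FF l s)"
  unfolding FF_def using g2_cont p2_cont by (intro continuous_intros) auto

lemma lam_ex1:
  assumes s: "s \<in> {0<..<tb}"
  shows "\<exists>!l. l \<in> {0..tb} \<and> FF l s = 0" "\<forall>l. l \<in> {0..tb} \<and> FF l s = 0 \<longrightarrow> l \<in> {0<..<tb}"
proof -
  have f0: "FF 0 s \<le> 0" using F0[OF s] by simp
  have ft: "0 \<le> FF tb s" using Ftb[OF s] by simp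
  have "\<exists>x. 0 \<le> x \<and> x \<le> tb \<and> FF x s = 0"
    using IVT'[of "\<lambda>l. FF l s" 0 0 tb, OF f0 ft _ F_cont] tb by simp
  then obtain l where l: "0 \<le> l" "l \<le> tb" "FF l s = 0" by blast
  have lm: "l \<in> {0..tb}" "s \<in> {0..tb}" using l s by auto
  have uniq: "l' = l" if l': "l' \<in> {0..tb}" "FF l' s = 0" for l'
  proof (cases rule: linorder_cases[of l' l])
    case less
    have "FF l' s < FF l s" by (rule F_mono[OF l'(1) lm(1) less lm(2)])
    then show ?thesis using l'(2) l(3) by simp
  next
    case equal then show ?thesis .
  next
    case greater
    have "FF l s < FF l' s" by (rule F_mono[OF lm(1) l'(1) greater lm(2)])
    then show ?thesis using l'(2) l(3) by simp
  qed
  show "\<exists>!l. l \<in> {0..tb} \<and> FF l s = 0"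
  proof (rule ex1I[of _ l])
    show "l \<in> {0..tb} \<and> FF l s = 0" using lm l by simp
    show "\<And>y. y \<in> {0..tb} \<and> FF y s = 0 \<Longrightarrow> y = l" using uniq by blast
  qed
  show "\<forall>l. l \<in> {0..tb} \<and> FF l s = 0 \<longrightarrow> l \<in> {0<..<tb}"
  proof (intro allI impI)
    fix l' assume l': "l' \<in> {0..tb} \<and> FF l' s = 0"
    then have "l' \<noteq> 0" "l' \<noteq> tb" using F0[OF s] Ftb[OF s] by auto
    then show "l' \<in> {0<..<tb}" using l' by auto
  qed
qed

definition lam :: "real \<Rightarrow> real" where "lam s = ruling_param tb g1 g2 \<phi> s"

lemma lam: assumes "s \<in> {0<..<tb}" shows "lam s \<in> {0<..<tb}" "FF (lam s) s = 0"
proof -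
  have eq: "lam s = (THE l. l \<in> {0..tb} \<and> FF l s = 0)"
    unfolding lam_def ruling_param_def horiz_F by simp
  have "lam s \<in> {0..tb} \<and> FF (lam s) s = 0"
    unfolding eq by (rule theI'[OF lam_ex1(1)[OF assms]])
  then show "lam s \<in> {0<..<tb}" "FF (lam s) s = 0" using lam_ex1(2)[OF assms] by auto
qed

lemma lam_lip:
  assumes s: "s1 \<in> {0<..<tb}" "s2 \<in> {0<..<tb}"
  shows "\<bar>(lam s2 - lam s1) - (s2 - s1)\<bar> \<le> (\<bar>lam s2 - lam s1\<bar> + \<bar>s2 - s1\<bar>) / 24"
proof -
  define l1 l2 where "l1 = lam s1" and "l2 = lam s2"
  have l: "l1 \<in> {0<..<tb}" "l2 \<in> {0<..<tb}" "FF l1 s1 = 0" "FF l2 s2 = 0"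
    using lam[OF s(1)] lam[OF s(2)] by (auto simp: l1_def l2_def)
  define E1 where "E1 = ((g2 l2 - g2 l1) - (g1 s2 - g1 s1)) * (p2 l2 + p1 s2)"
  define E2 where "E2 = (g2 l1 - g1 s1) * ((p2 l2 - p2 l1) + (p1 s2 - p1 s1))"
  have id: "FF l2 s2 - FF l1 s1 = (l2 - l1) - (s2 - s1) + 2 * E1 + 2 * E2"
    unfolding FF_def E1_def E2_def by (simp add: algebra_simps)
  have b1: "\<bar>g2 l2 - g2 l1\<bar> \<le> Lg * \<bar>l2 - l1\<bar>" using g2L[rule_format, of l2 l1] l by auto
  have b2: "\<bar>g1 s2 - g1 s1\<bar> \<le> Lg * \<bar>s2 - s1\<bar>" using g1L[rule_format, of s2 s1] s by auto
  have b3: "\<bar>p2 l2 - p2 l1\<bar> \<le> Lp * \<bar>l2 - l1\<bar>" using p2L[rule_format, of l2 l1] l by auto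
  have b4: "\<bar>p1 s2 - p1 s1\<bar> \<le> Lp * \<bar>s2 - s1\<bar>" using p1L[rule_format, of s2 s1] s by auto
  have a1: "\<bar>(g2 l2 - g2 l1) - (g1 s2 - g1 s1)\<bar> \<le> Lg * \<bar>l2 - l1\<bar> + Lg * \<bar>s2 - s1\<bar>"
    using b1 b2 abs_triangle_ineq4[of "g2 l2 - g2 l1" "g1 s2 - g1 s1"] by linarith
  have a2: "\<bar>p2 l2 + p1 s2\<bar> \<le> 2 * Ph" using p2B[rule_format, of l2] p1B[rule_format, of s2] l s by (intro tri2) auto
  have a3: "\<bar>g2 l1 - g1 s1\<bar> \<le> 2 * Gm" using g2B[rule_format, of l1] g1B[rule_format, of s1] l s by (intro tri2) auto
  have a4: "\<bar>(p2 l2 - p2 l1) + (p1 s2 - p1 s1)\<bar> \<le> Lp * \<bar>l2 - l1\<bar> + Lp * \<bar>s2 - s1\<bar>"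
    using b3 b4 abs_triangle_ineq[of "p2 l2 - p2 l1" "p1 s2 - p1 s1"] by linarith
  define m where "m = \<bar>l2 - l1\<bar> + \<bar>s2 - s1\<bar>"
  define a where "a = Lg * Ph * m"
  define b where "b = Gm * Lp * m"
  have "\<bar>E1\<bar> \<le> (Lg * \<bar>l2 - l1\<bar> + Lg * \<bar>s2 - s1\<bar>) * (2 * Ph)"
    unfolding E1_def by (rule abs_prod_le[OF a1 a2])
  also have "\<dots> = 2 * a" unfolding a_def m_def by (simp add: algebra_simps)
  finally have e1: "\<bar>E1\<bar> \<le> 2 * a" .
  have "\<bar>E2\<bar> \<le> (2 * Gm) * (Lp * \<bar>l2 - l1\<bar> + Lp * \<bar>s2 - s1\<bar>)"
    unfolding E2_def by (rule abs_prod_le[OF a3 a4])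
  also have "\<dots> = 2 * b" unfolding b_def m_def by (simp add: algebra_simps)
  finally have e2: "\<bar>E2\<bar> \<le> 2 * b" .
  have "(Gm * Lp + Lg * Ph) * m \<le> (1/96) * m"
    unfolding m_def using z by (intro mult_right_mono) auto
  moreover have "(Gm * Lp + Lg * Ph) * m = a + b" unfolding a_def b_def by (simp add: algebra_simps)
  ultimately have ab: "a + b \<le> m / 96" by simp
  have dd: "(l2 - l1) - (s2 - s1) = - 2 * E1 - 2 * E2" using id l(3,4) by linarith
  have c1: "(l2 - l1) - (s2 - s1) \<le> m / 24" "- ((l2 - l1) - (s2 - s1)) \<le> m / 24"
    using dd ab abs_le_D1[OF e1] abs_le_D2[OF e1] abs_le_D1[OF e2] abs_le_D2[OF e2] by linarith+
  have "\<bar>(l2 - l1) - (s2 - s1)\<bar> \<le> m / 24" by (rule abs_leI[OF c1])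
  then show ?thesis unfolding l1_def l2_def m_def .
qed

lemma lam_mono:
  assumes "s1 \<in> {0<..<tb}" "s2 \<in> {0<..<tb}" "s1 < s2"
  shows "lam s1 < lam s2" "\<bar>lam s2 - lam s1\<bar> \<le> 2 * \<bar>s2 - s1\<bar>"
proof -
  have "s2 - s1 > 0" using assms(3) by simp
  from aux_lam[OF lam_lip[OF assms(1,2)] this] show "lam s1 < lam s2" "\<bar>lam s2 - lam s1\<bar> \<le> 2 * \<bar>s2 - s1\<bar>"
    by simp_all
qed

lemma lam_lip2:
  assumes "s1 \<in> {0<..<tb}" "s2 \<in> {0<..<tb}"
  shows "\<bar>lam s2 - lam s1\<bar> \<le> 2 * \<bar>s2 - s1\<bar>"
proof -
  consider "s1 < s2" | "s1 = s2" | "s2 < s1" by linarith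
  then show ?thesis
  proof cases
    case 1 then show ?thesis using lam_mono(2)[OF assms] by simp
  next
    case 2 then show ?thesis by simp
  next
    case 3 then show ?thesis using lam_mono(2)[OF assms(2,1)] by (simp add: abs_minus_commute)
  qed
qed

end


context rs begin

definition GG where "GG s = g2 (lam s)"
definition BB where "BB s = p2 (lam s)"
definition db where "db s = GG s - g1 s"
definition hh where "hh y s = (y - g1 s) / db s"
definition XX where "XX y s = p1 s + hh y s * (BB s - p1 s)"
definition Tl where "Tl y s = s - 2 * (y - g1 s) * (p1 s + XX y s)"
definition Tr where "Tr y s = Tl y s + 4 * y * XX y s"
definition J where "J y = {s \<in> {0<..<tb}. g1 s < y \<and> y < GG s}"

lemma basic:
  assumes "s \<in> {0<..<tb}"
  shows "g1 s < 0" "0 < GG s" "0 < db s" "\<bar>g1 s\<bar> \<le> Gm" "\<bar>GG s\<bar> \<le> Gm" "\<bar>p1 s\<bar> \<le> Ph"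
    "\<bar>BB s\<bar> \<le> Ph" "lam s = s - 2 * db s * (BB s + p1 s)"
proof -
  have l: "lam s \<in> {0<..<tb}" "FF (lam s) s = 0" using lam[OF assms] by auto
  show "g1 s < 0" using sign assms by auto
  show "0 < GG s" using sign l unfolding GG_def by auto
  then show "0 < db s" using sign assms unfolding db_def by force
  show "\<bar>g1 s\<bar> \<le> Gm" using g1B assms by auto
  show "\<bar>GG s\<bar> \<le> Gm" using g2B l unfolding GG_def by auto
  show "\<bar>p1 s\<bar> \<le> Ph" using p1B assms by auto
  show "\<bar>BB s\<bar> \<le> Ph" using p2B l unfolding BB_def by auto
  show "lam s = s - 2 * db s * (BB s + p1 s)" using l(2) unfolding FF_def db_def GG_def BB_def by linarith
qed

lemma rho_eq:
  assumes s: "s \<in> {0<..<tb}" and h: "h \<in> {0<..<1}"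
    and rm: "ruling_map tb g1 g2 \<phi> (h, s) = (x, y, T)"
  shows "s \<in> J y" "x = XX y s" "T - 2 * y * x = Tl y s"
proof -
  have rm2: "ruling_map tb g1 g2 \<phi> (h, s) = ((1 - h) * p1 s + h * BB s, (1 - h) * g1 s + h * GG s,
      (1 - h) * (s + 2 * g1 s * p1 s) + h * (lam s + 2 * GG s * BB s))"
    unfolding ruling_map_def curve_pt_def lam_def[symmetric] BB_def GG_def by simp
  have x: "x = (1 - h) * p1 s + h * BB s" and y: "y = (1 - h) * g1 s + h * GG s"
    and T: "T = (1 - h) * (s + 2 * g1 s * p1 s) + h * (lam s + 2 * GG s * BB s)"
    using rm rm2 by auto
  have b: "0 < db s" "lam s = s - 2 * db s * (BB s + p1 s)" using basic[OF s] by auto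
  have yg: "y - g1 s = h * db s" unfolding y db_def by (simp add: algebra_simps)
  have Gy: "GG s - y = (1 - h) * db s" unfolding y db_def by (simp add: algebra_simps)
  have hh: "hh y s = h" unfolding hh_def yg using b(1) by simp
  have "0 < h * db s" "0 < (1 - h) * db s" using h b(1) by auto
  then show "s \<in> J y" unfolding J_def using yg Gy s by auto
  show xx: "x = XX y s" unfolding XX_def hh x by (simp add: algebra_simps)
  have "Tl y s = s - 2 * (h * db s) * (p1 s + x)" unfolding Tl_def yg xx[symmetric] by simp
  also have "\<dots> = T - 2 * y * x"
    unfolding T x y b(2) db_def by (simp add: algebra_simps)
  finally show "T - 2 * y * x = Tl y s" by simp
qed

lemma lam_le: assumes "a \<in> {0<..<tb}" "b \<in> {0<..<tb}" "a \<le> b" shows "lam a \<le> lam b"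
proof (cases "a = b")
  case True then show ?thesis by simp
next
  case False then show ?thesis using lam_mono(1)[OF assms(1,2)] assms(3) by simp
qed

lemma J_conv:
  assumes "a \<in> J y" "b \<in> J y" "a \<le> r" "r \<le> b"
  shows "r \<in> J y"
proof -
  have ab: "a \<in> {0<..<tb}" "b \<in> {0<..<tb}" "g1 a < y" "g1 b < y" "y < GG a" "y < GG b"
    using assms unfolding J_def by auto
  have r: "r \<in> {0<..<tb}" using ab assms by auto
  have g: "g1 r < y"
  proof (cases "y \<ge> 0")
    case True then show ?thesis using basic(1)[OF r] by simp
  next
    case False
    have "g1 r \<le> max (g1 a) (g1 b)" by (rule convex_le_max[OF cvx ab(1,2) assms(3,4)])
    then show ?thesis using ab by simp
  qed
  have G: "y < GG r"
  proof (cases "y \<le> 0")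
    case True then show ?thesis using basic(2)[OF r] by simp
  next
    case False
    have la: "lam a \<in> {0<..<tb}" "lam b \<in> {0<..<tb}" using lam ab by auto
    have "min (g2 (lam a)) (g2 (lam b)) \<le> g2 (lam r)"
      by (rule concave_ge_min[OF ccv la]) (use lam_le ab r assms in auto)
    then show ?thesis using ab unfolding GG_def by simp
  qed
  show ?thesis unfolding J_def using r g G by auto
qed

end


context rs begin

lemma Tr_alt: "Tr y s = s + 2 * g1 s * p1 s + 2 * (y + g1 s) * XX y s - 2 * y * p1 s"
  unfolding Tr_def Tl_def by (simp add: algebra_simps)

lemma core:
  assumes s1J: "s1 \<in> J y" and s2J: "s2 \<in> J y" and le: "s1 \<le> s2" and dd: "db s1 \<le> 2 * db s2"
  shows "(s2 - s1) / 4 \<le> Tr y s2 - Tr y s1" "\<bar>Tl y s2 - Tl y s1\<bar> \<le> 3 * (s2 - s1)"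
proof -
  define ds where "ds = s2 - s1"
  define ga where "ga = g1 s1"
  define gb where "gb = g1 s2"
  define A1 where "A1 = p1 s1"
  define A2 where "A2 = p1 s2"
  define G1 where "G1 = GG s1"
  define G2 where "G2 = GG s2"
  define B1 where "B1 = BB s1"
  define B2 where "B2 = BB s2"
  define d1 where "d1 = db s1"
  define d2 where "d2 = db s2"
  define h1 where "h1 = hh y s1"
  define h2 where "h2 = hh y s2"
  define X1 where "X1 = XX y s1"
  define X2 where "X2 = XX y s2"
  have s1: "s1 \<in> {0<..<tb}" "ga < y" "y < G1" using s1J unfolding J_def ga_def G1_def by auto
  have s2: "s2 \<in> {0<..<tb}" "gb < y" "y < G2" using s2J unfolding J_def gb_def G2_def by auto
  have ds0: "0 \<le> ds" using le unfolding ds_def by simp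
  have bs1: "ga < 0" "0 < G1" "0 < d1" "\<bar>ga\<bar> \<le> Gm" "\<bar>G1\<bar> \<le> Gm" "\<bar>A1\<bar> \<le> Ph" "\<bar>B1\<bar> \<le> Ph"
    using basic[OF s1(1)] unfolding ga_def G1_def d1_def A1_def B1_def by auto
  have bs2: "gb < 0" "0 < G2" "0 < d2" "\<bar>gb\<bar> \<le> Gm" "\<bar>G2\<bar> \<le> Gm" "\<bar>A2\<bar> \<le> Ph" "\<bar>B2\<bar> \<le> Ph"
    using basic[OF s2(1)] unfolding gb_def G2_def d2_def A2_def B2_def by auto
  have d1e: "d1 = G1 - ga" unfolding d1_def db_def G1_def ga_def ..
  have d2e: "d2 = G2 - gb" unfolding d2_def db_def G2_def gb_def ..
  have h1e: "h1 * d1 = y - ga" unfolding h1_def hh_def d1_def[symmetric] ga_def[symmetric] using bs1(3) by simp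
  have h2e: "h2 * d2 = y - gb" unfolding h2_def hh_def d2_def[symmetric] gb_def[symmetric] using bs2(3) by simp
  have h1b: "0 < h1" "h1 < 1"
  proof -
    have "0 < h1 * d1" using h1e s1 by simp
    then show "0 < h1" using bs1(3) by (simp add: zero_less_mult_iff)
    have "h1 * d1 < 1 * d1" using h1e s1 d1e by simp
    then show "h1 < 1" using bs1(3) by simp
  qed
  have X1e: "X1 = (1 - h1) * A1 + h1 * B1" unfolding X1_def XX_def h1_def A1_def B1_def by (simp add: algebra_simps)
  have X2e: "X2 = (1 - h2) * A2 + h2 * B2" unfolding X2_def XX_def h2_def A2_def B2_def by (simp add: algebra_simps)
  have h2b: "0 < h2" "h2 < 1"
  proof -
    have "0 < h2 * d2" using h2e s2 by simp
    then show "0 < h2" using bs2(3) by (simp add: zero_less_mult_iff)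
    have "h2 * d2 < 1 * d2" using h2e s2 d2e by simp
    then show "h2 < 1" using bs2(3) by simp
  qed
  have X2b: "\<bar>X2\<bar> \<le> Ph"
  proof -
    have u1: "\<bar>(1 - h2) * A2\<bar> \<le> (1 - h2) * Ph" using bs2(6) h2b by (simp add: abs_mult mult_left_mono)
    have u2: "\<bar>h2 * B2\<bar> \<le> h2 * Ph" using bs2(7) h2b by (simp add: abs_mult mult_left_mono)
    have u3: "(1 - h2) * Ph + h2 * Ph = Ph" by (simp add: algebra_simps)
    have "\<bar>X2\<bar> \<le> \<bar>(1 - h2) * A2\<bar> + \<bar>h2 * B2\<bar>" unfolding X2e by (rule abs_triangle_ineq)
    then show ?thesis using u1 u2 u3 by linarith
  qed
  have f1: "\<bar>gb - ga\<bar> \<le> Lg * ds" using g1L[rule_format, of s2 s1] s1 s2 le unfolding gb_def ga_def ds_def by auto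
  have f2: "\<bar>A2 - A1\<bar> \<le> Lp * ds" using p1L[rule_format, of s2 s1] s1 s2 le unfolding A2_def A1_def ds_def by auto
  have lamd: "\<bar>lam s2 - lam s1\<bar> \<le> 2 * ds" using lam_lip2[OF s1(1) s2(1)] le unfolding ds_def by simp
  have lm: "lam s1 \<in> {0<..<tb}" "lam s2 \<in> {0<..<tb}" using lam s1 s2 by auto
  have f3: "\<bar>G2 - G1\<bar> \<le> 2 * Lg * ds"
  proof -
    have "\<bar>G2 - G1\<bar> \<le> Lg * \<bar>lam s2 - lam s1\<bar>" using g2L[rule_format, of "lam s2" "lam s1"] lm unfolding G2_def G1_def GG_def by auto
    also have "\<dots> \<le> Lg * (2 * ds)" by (rule mult_left_mono[OF lamd nn(2)])
    finally show ?thesis by simp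
  qed
  have f4: "\<bar>B2 - B1\<bar> \<le> 2 * Lp * ds"
  proof -
    have "\<bar>B2 - B1\<bar> \<le> Lp * \<bar>lam s2 - lam s1\<bar>" using p2L[rule_format, of "lam s2" "lam s1"] lm unfolding B2_def B1_def BB_def by auto
    also have "\<dots> \<le> Lp * (2 * ds)" by (rule mult_left_mono[OF lamd nn(4)])
    finally show ?thesis by simp
  qed
  have yG: "\<bar>y\<bar> \<le> Gm" using s1 bs1 by auto
  have yga1: "\<bar>y + ga\<bar> \<le> 2 * Gm" using yG bs1(4) by auto
  have yga2: "\<bar>y + ga\<bar> \<le> 4 * d2" using s1 bs1 d1e dd unfolding d1_def[symmetric] d2_def[symmetric] by auto
  have yd2: "\<bar>y\<bar> \<le> d2" using s2 bs2 d2e by auto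
  have Pe: "(h2 - h1) * d2 = - ((1 - h1) * (gb - ga)) - h1 * (G2 - G1)"
  proof -
    have "h1 * d2 = h1 * d1 + h1 * (G2 - G1) - h1 * (gb - ga)" unfolding d1e d2e by (simp add: algebra_simps)
    moreover have "(h2 - h1) * d2 = h2 * d2 - h1 * d2" by (simp add: algebra_simps)
    moreover have "(1 - h1) * (gb - ga) = (gb - ga) - h1 * (gb - ga)" by (simp add: algebra_simps)
    ultimately show ?thesis using h1e h2e by linarith
  qed
  define c where "c = Lg * ds"
  have P1: "\<bar>(1 - h1) * (gb - ga)\<bar> \<le> 1 * c" unfolding c_def using h1b f1 by (intro abs_prod_le) auto
  have P2: "\<bar>h1 * (G2 - G1)\<bar> \<le> 1 * (2 * c)" unfolding c_def using h1b f3 by (intro abs_prod_le) auto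
  have "\<bar>(h2 - h1) * d2\<bar> \<le> \<bar>- ((1 - h1) * (gb - ga))\<bar> + \<bar>h1 * (G2 - G1)\<bar>"
    unfolding Pe by (rule abs_triangle_ineq4)
  then have "\<bar>(h2 - h1) * d2\<bar> \<le> 3 * c" using P1 P2 by simp
  then have Pb: "\<bar>(h2 - h1) * d2\<bar> \<le> 3 * Lg * ds" unfolding c_def by (simp add: algebra_simps)
  define Q where "Q = (y + ga) * (h2 - h1)"
  define R where "R = y * (h2 - h1)"
  have Qb: "\<bar>Q\<bar> \<le> 12 * Lg * ds"
  proof -
    have "\<bar>Q\<bar> * d2 = \<bar>y + ga\<bar> * \<bar>(h2 - h1) * d2\<bar>" unfolding Q_def using bs2(3) by (simp add: abs_mult)
    also have "\<dots> \<le> (4 * d2) * (3 * Lg * ds)" using yga2 Pb by (intro mult_mono) auto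
    also have "\<dots> = (12 * Lg * ds) * d2" by (simp add: algebra_simps)
    finally show ?thesis using bs2(3) by simp
  qed
  have Rb: "\<bar>R\<bar> \<le> 3 * Lg * ds"
  proof -
    have "\<bar>R\<bar> * d2 = \<bar>y\<bar> * \<bar>(h2 - h1) * d2\<bar>" unfolding R_def using bs2(3) by (simp add: abs_mult)
    also have "\<dots> \<le> d2 * (3 * Lg * ds)" using yd2 Pb by (intro mult_mono) auto
    also have "\<dots> = (3 * Lg * ds) * d2" by (simp add: algebra_simps)
    finally show ?thesis using bs2(3) by simp
  qed
  define M where "M = (1 - h1) * (A2 - A1) + h1 * (B2 - B1)"
  have Mb: "\<bar>M\<bar> \<le> 3 * Lp * ds"
  proof -
    define e where "e = Lp * ds"
    have u1: "\<bar>(1 - h1) * (A2 - A1)\<bar> \<le> 1 * e" unfolding e_def using h1b f2 by (intro abs_prod_le) auto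
    have u2: "\<bar>h1 * (B2 - B1)\<bar> \<le> 1 * (2 * e)" unfolding e_def using h1b f4 by (intro abs_prod_le) auto
    have "\<bar>M\<bar> \<le> \<bar>(1 - h1) * (A2 - A1)\<bar> + \<bar>h1 * (B2 - B1)\<bar>" unfolding M_def by (rule abs_triangle_ineq)
    then have "\<bar>M\<bar> \<le> 3 * e" using u1 u2 by simp
    then show ?thesis unfolding e_def by (simp add: algebra_simps)
  qed
  have dX: "X2 - X1 = M + (h2 - h1) * (B2 - A2)" unfolding X1e X2e M_def by (simp add: algebra_simps)
  define a where "a = Lg * Ph * ds"
  define b where "b = Gm * Lp * ds"
  have ab0: "0 \<le> a" "0 \<le> b" unfolding a_def b_def using nn ds0 by auto
  have ab: "a + b \<le> ds / 96"
  proof -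
    have "(Gm * Lp + Lg * Ph) * ds \<le> (1/96) * ds" using z ds0 by (intro mult_right_mono) auto
    moreover have "(Gm * Lp + Lg * Ph) * ds = a + b" unfolding a_def b_def by (simp add: algebra_simps)
    ultimately show ?thesis by simp
  qed
  define T1 where "T1 = (gb - ga) * A2"
  define T2 where "T2 = ga * (A2 - A1)"
  define T3 where "T3 = (gb - ga) * X2"
  define T4 where "T4 = (y + ga) * M"
  define T5 where "T5 = Q * (B2 - A2)"
  define T6 where "T6 = y * (A2 - A1)"
  define T7 where "T7 = y * M"
  define T8 where "T8 = R * (B2 - A2)"
  have BA2: "\<bar>B2 - A2\<bar> \<le> 2 * Ph" using bs2(6,7) by (intro tri2) auto
  have t1: "\<bar>T1\<bar> \<le> a"
  proof -
    have "\<bar>T1\<bar> \<le> (Lg * ds) * Ph" unfolding T1_def using f1 bs2(6) by (rule abs_prod_le)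
    then show ?thesis unfolding a_def by (simp add: algebra_simps)
  qed
  have t2: "\<bar>T2\<bar> \<le> b"
  proof -
    have "\<bar>T2\<bar> \<le> Gm * (Lp * ds)" unfolding T2_def using bs1(4) f2 by (rule abs_prod_le)
    then show ?thesis unfolding b_def by (simp add: algebra_simps)
  qed
  have t3: "\<bar>T3\<bar> \<le> a"
  proof -
    have "\<bar>T3\<bar> \<le> (Lg * ds) * Ph" unfolding T3_def using f1 X2b by (rule abs_prod_le)
    then show ?thesis unfolding a_def by (simp add: algebra_simps)
  qed
  have t4: "\<bar>T4\<bar> \<le> 6 * b"
  proof -
    have "\<bar>T4\<bar> \<le> (2 * Gm) * (3 * Lp * ds)" unfolding T4_def using yga1 Mb by (rule abs_prod_le)
    then show ?thesis unfolding b_def by (simp add: algebra_simps)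
  qed
  have t5: "\<bar>T5\<bar> \<le> 24 * a"
  proof -
    have "\<bar>T5\<bar> \<le> (12 * Lg * ds) * (2 * Ph)" unfolding T5_def using Qb BA2 by (rule abs_prod_le)
    then show ?thesis unfolding a_def by (simp add: algebra_simps)
  qed
  have t6: "\<bar>T6\<bar> \<le> b"
  proof -
    have "\<bar>T6\<bar> \<le> Gm * (Lp * ds)" unfolding T6_def using yG f2 by (rule abs_prod_le)
    then show ?thesis unfolding b_def by (simp add: algebra_simps)
  qed
  have t7: "\<bar>T7\<bar> \<le> 3 * b"
  proof -
    have "\<bar>T7\<bar> \<le> Gm * (3 * Lp * ds)" unfolding T7_def using yG Mb by (rule abs_prod_le)
    then show ?thesis unfolding b_def by (simp add: algebra_simps)
  qed
  have t8: "\<bar>T8\<bar> \<le> 6 * a"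
  proof -
    have "\<bar>T8\<bar> \<le> (3 * Lg * ds) * (2 * Ph)" unfolding T8_def using Rb BA2 by (rule abs_prod_le)
    then show ?thesis unfolding a_def by (simp add: algebra_simps)
  qed
  have i1: "gb * A2 - ga * A1 = T1 + T2" unfolding T1_def T2_def by (simp add: algebra_simps)
  have i2: "(y + gb) * X2 - (y + ga) * X1 = T3 + T4 + T5"
  proof -
    have "T4 + T5 = (y + ga) * (X2 - X1)" unfolding T4_def T5_def Q_def dX by (simp add: algebra_simps)
    then show ?thesis unfolding T3_def by (simp add: algebra_simps)
  qed
  have i3: "y * (X2 - X1) = T7 + T8" unfolding T7_def T8_def R_def dX by (simp add: algebra_simps)
  have TrD: "Tr y s2 - Tr y s1 = ds + 2 * (gb * A2 - ga * A1) + 2 * ((y + gb) * X2 - (y + ga) * X1) - 2 * T6"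
    unfolding Tr_alt ds_def T6_def ga_def gb_def A1_def A2_def X1_def X2_def by (simp add: algebra_simps)
  have TrD2: "Tr y s2 - Tr y s1 = ds + 2 * T1 + 2 * T2 + 2 * T3 + 2 * T4 + 2 * T5 - 2 * T6"
    using TrD i1 i2 by simp
  have TlD: "Tl y s2 - Tl y s1 = (Tr y s2 - Tr y s1) - 4 * T7 - 4 * T8"
  proof -
    have "Tl y s2 - Tl y s1 = (Tr y s2 - Tr y s1) - 4 * (y * (X2 - X1))"
      unfolding Tr_def X1_def X2_def by (simp add: algebra_simps)
    then show ?thesis using i3 by simp
  qed
  note bnds = abs_le_D1[OF t1] abs_le_D2[OF t1] abs_le_D1[OF t2] abs_le_D2[OF t2]
    abs_le_D1[OF t3] abs_le_D2[OF t3] abs_le_D1[OF t4] abs_le_D2[OF t4]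
    abs_le_D1[OF t5] abs_le_D2[OF t5] abs_le_D1[OF t6] abs_le_D2[OF t6]
    abs_le_D1[OF t7] abs_le_D2[OF t7] abs_le_D1[OF t8] abs_le_D2[OF t8]
  show "(s2 - s1) / 4 \<le> Tr y s2 - Tr y s1"
    using TrD2 bnds ab ab0 unfolding ds_def[symmetric] by linarith
  have "Tl y s2 - Tl y s1 \<le> 3 * ds" "- (Tl y s2 - Tl y s1) \<le> 3 * ds"
    using TlD TrD2 bnds ab ab0 by linarith+
  then show "\<bar>Tl y s2 - Tl y s1\<bar> \<le> 3 * (s2 - s1)" unfolding ds_def by (rule abs_leI)
qed

end


context rs begin

lemma db_lip:
  assumes "s \<in> {0<..<tb}" "s0 \<in> {0<..<tb}"
  shows "\<bar>db s - db s0\<bar> \<le> 3 * (Lg * \<bar>s - s0\<bar>)"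
proof -
  have lm: "lam s \<in> {0<..<tb}" "lam s0 \<in> {0<..<tb}" using lam assms by auto
  have "\<bar>GG s - GG s0\<bar> \<le> Lg * \<bar>lam s - lam s0\<bar>"
    using g2L[rule_format, of "lam s" "lam s0"] lm unfolding GG_def by auto
  also have "\<dots> \<le> Lg * (2 * \<bar>s - s0\<bar>)" by (rule mult_left_mono[OF lam_lip2[OF assms(2,1)] nn(2)])
  finally have a: "\<bar>GG s - GG s0\<bar> \<le> 2 * (Lg * \<bar>s - s0\<bar>)" by (simp add: algebra_simps)
  have b: "\<bar>g1 s - g1 s0\<bar> \<le> Lg * \<bar>s - s0\<bar>" using g1L[rule_format, of s s0] assms by auto
  have "\<bar>db s - db s0\<bar> \<le> \<bar>GG s - GG s0\<bar> + \<bar>g1 s - g1 s0\<bar>" unfolding db_def by linarith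
  then show ?thesis using a b by linarith
qed

lemma loc_est:
  assumes s0: "s0 \<in> J y"
  shows "\<exists>d>0. \<forall>s1 s2. s1 \<in> J y \<longrightarrow> s2 \<in> J y \<longrightarrow> \<bar>s1 - s0\<bar> < d \<longrightarrow> \<bar>s2 - s0\<bar> < d \<longrightarrow> s1 \<le> s2
     \<longrightarrow> (s2 - s1) / 4 \<le> Tr y s2 - Tr y s1 \<and> \<bar>Tl y s2 - Tl y s1\<bar> \<le> 3 * (s2 - s1)"
proof -
  have s0i: "s0 \<in> {0<..<tb}" using s0 unfolding J_def by auto
  define d0 where "d0 = db s0"
  have d0p: "0 < d0" using basic(3)[OF s0i] unfolding d0_def .
  define del where "del = d0 / (9 * Lg + 1)"
  have den: "0 < 9 * Lg + 1" using nn(2) by simp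
  have delp: "0 < del" unfolding del_def using d0p den by simp
  have deq: "(9 * Lg + 1) * del = d0" unfolding del_def using den by simp
  define w where "w = Lg * del"
  have weq: "9 * w + del = d0" using deq unfolding w_def by (simp add: algebra_simps)
  have near: "\<bar>db s - d0\<bar> \<le> 3 * w" if "s \<in> J y" "\<bar>s - s0\<bar> < del" for s
  proof -
    have si: "s \<in> {0<..<tb}" using that(1) unfolding J_def by auto
    have "Lg * \<bar>s - s0\<bar> \<le> Lg * del" using that(2) nn(2) by (intro mult_left_mono) auto
    then show ?thesis using db_lip[OF si s0i] unfolding d0_def w_def by linarith
  qed
  show ?thesis
  proof (intro exI[of _ del] conjI delp allI impI)
    fix s1 s2 assume a: "s1 \<in> J y" "s2 \<in> J y" "\<bar>s1 - s0\<bar> < del" "\<bar>s2 - s0\<bar> < del" "s1 \<le> s2"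
    have "db s1 \<le> 2 * db s2" using near[OF a(1,3)] near[OF a(2,4)] weq delp by linarith
    then show "(s2 - s1) / 4 \<le> Tr y s2 - Tr y s1" "\<bar>Tl y s2 - Tl y s1\<bar> \<le> 3 * (s2 - s1)"
      using core[OF a(1,2,5)] by auto
  qed
qed

lemma glob_est:
  assumes a: "s1 \<in> J y" "s2 \<in> J y" "s1 \<le> s2"
  shows "(s2 - s1) / 4 \<le> Tr y s2 - Tr y s1" "\<bar>Tl y s2 - Tl y s1\<bar> \<le> 3 * (s2 - s1)"
proof -
  have conv: "\<And>a b r. a \<in> J y \<Longrightarrow> b \<in> J y \<Longrightarrow> a \<le> r \<Longrightarrow> r \<le> b \<Longrightarrow> r \<in> J y"
    using J_conv by blast
  have F1: "Tr y s1 - s1 / 4 \<le> Tr y s2 - s2 / 4"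
  proof (rule loc_glob[where J="J y" and F="\<lambda>s. Tr y s - s / 4", OF conv _ a])
    fix s0 assume "s0 \<in> J y"
    from loc_est[OF this] obtain d where d: "d > 0" "\<forall>s1 s2. s1 \<in> J y \<longrightarrow> s2 \<in> J y \<longrightarrow> \<bar>s1 - s0\<bar> < d \<longrightarrow> \<bar>s2 - s0\<bar> < d \<longrightarrow> s1 \<le> s2
     \<longrightarrow> (s2 - s1) / 4 \<le> Tr y s2 - Tr y s1 \<and> \<bar>Tl y s2 - Tl y s1\<bar> \<le> 3 * (s2 - s1)" by blast
    show "\<exists>d>0. \<forall>s1 s2. s1 \<in> J y \<longrightarrow> s2 \<in> J y \<longrightarrow> \<bar>s1 - s0\<bar> < d \<longrightarrow> \<bar>s2 - s0\<bar> < d \<longrightarrow> s1 \<le> s2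
                 \<longrightarrow> Tr y s1 - s1 / 4 \<le> Tr y s2 - s2 / 4"
    proof (intro exI[of _ d] conjI d(1) allI impI)
      fix t1 t2 assume t: "t1 \<in> J y" "t2 \<in> J y" "\<bar>t1 - s0\<bar> < d" "\<bar>t2 - s0\<bar> < d" "t1 \<le> t2"
      then have "(t2 - t1) / 4 \<le> Tr y t2 - Tr y t1" using d(2) by blast
      moreover have "(t2 - t1) / 4 = t2 / 4 - t1 / 4" by (simp add: diff_divide_distrib)
      ultimately show "Tr y t1 - t1 / 4 \<le> Tr y t2 - t2 / 4" by linarith
    qed
  qed
  have F2: "3 * s1 - Tl y s1 \<le> 3 * s2 - Tl y s2"
  proof (rule loc_glob[where J="J y" and F="\<lambda>s. 3 * s - Tl y s", OF conv _ a])
    fix s0 assume "s0 \<in> J y"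
    from loc_est[OF this] obtain d where d: "d > 0" "\<forall>s1 s2. s1 \<in> J y \<longrightarrow> s2 \<in> J y \<longrightarrow> \<bar>s1 - s0\<bar> < d \<longrightarrow> \<bar>s2 - s0\<bar> < d \<longrightarrow> s1 \<le> s2
     \<longrightarrow> (s2 - s1) / 4 \<le> Tr y s2 - Tr y s1 \<and> \<bar>Tl y s2 - Tl y s1\<bar> \<le> 3 * (s2 - s1)" by blast
    show "\<exists>d>0. \<forall>s1 s2. s1 \<in> J y \<longrightarrow> s2 \<in> J y \<longrightarrow> \<bar>s1 - s0\<bar> < d \<longrightarrow> \<bar>s2 - s0\<bar> < d \<longrightarrow> s1 \<le> s2
                 \<longrightarrow> 3 * s1 - Tl y s1 \<le> 3 * s2 - Tl y s2"
    proof (intro exI[of _ d] conjI d(1) allI impI)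
      fix t1 t2 assume t: "t1 \<in> J y" "t2 \<in> J y" "\<bar>t1 - s0\<bar> < d" "\<bar>t2 - s0\<bar> < d" "t1 \<le> t2"
      then have "\<bar>Tl y t2 - Tl y t1\<bar> \<le> 3 * (t2 - t1)" using d(2) by blast
      moreover have "3 * (t2 - t1) = 3 * t2 - 3 * t1" by simp
      ultimately show "3 * t1 - Tl y t1 \<le> 3 * t2 - Tl y t2" by linarith
    qed
  qed
  have F3: "3 * s1 + Tl y s1 \<le> 3 * s2 + Tl y s2"
  proof (rule loc_glob[where J="J y" and F="\<lambda>s. 3 * s + Tl y s", OF conv _ a])
    fix s0 assume "s0 \<in> J y"
    from loc_est[OF this] obtain d where d: "d > 0" "\<forall>s1 s2. s1 \<in> J y \<longrightarrow> s2 \<in> J y \<longrightarrow> \<bar>s1 - s0\<bar> < d \<longrightarrow> \<bar>s2 - s0\<bar> < d \<longrightarrow> s1 \<le> s2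
     \<longrightarrow> (s2 - s1) / 4 \<le> Tr y s2 - Tr y s1 \<and> \<bar>Tl y s2 - Tl y s1\<bar> \<le> 3 * (s2 - s1)" by blast
    show "\<exists>d>0. \<forall>s1 s2. s1 \<in> J y \<longrightarrow> s2 \<in> J y \<longrightarrow> \<bar>s1 - s0\<bar> < d \<longrightarrow> \<bar>s2 - s0\<bar> < d \<longrightarrow> s1 \<le> s2
                 \<longrightarrow> 3 * s1 + Tl y s1 \<le> 3 * s2 + Tl y s2"
    proof (intro exI[of _ d] conjI d(1) allI impI)
      fix t1 t2 assume t: "t1 \<in> J y" "t2 \<in> J y" "\<bar>t1 - s0\<bar> < d" "\<bar>t2 - s0\<bar> < d" "t1 \<le> t2"
      then have "\<bar>Tl y t2 - Tl y t1\<bar> \<le> 3 * (t2 - t1)" using d(2) by blast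
      moreover have "3 * (t2 - t1) = 3 * t2 - 3 * t1" by simp
      ultimately show "3 * t1 + Tl y t1 \<le> 3 * t2 + Tl y t2" by linarith
    qed
  qed
  have "(s2 - s1) / 4 = s2 / 4 - s1 / 4" by (simp add: diff_divide_distrib)
  then show "(s2 - s1) / 4 \<le> Tr y s2 - Tr y s1" using F1 by linarith
  have "3 * (s2 - s1) = 3 * s2 - 3 * s1" by simp
  then have "Tl y s2 - Tl y s1 \<le> 3 * (s2 - s1)" "- (Tl y s2 - Tl y s1) \<le> 3 * (s2 - s1)" using F2 F3 by linarith+
  then show "\<bar>Tl y s2 - Tl y s1\<bar> \<le> 3 * (s2 - s1)" by (rule abs_leI)
qed

lemma pt:
  assumes "(y, t) \<in> D"
  shows "\<exists>s. s \<in> J y \<and> u (y, t) = XX y s \<and> t = Tl y s"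
proof -
  have "(u (y, t), y, t + 2 * y * u (y, t)) \<in> left_graph u D"
    unfolding left_graph_def by (rule image_eqI[where x="(y, t)"]) (use assms in auto)
  then have "(u (y, t), y, t + 2 * y * u (y, t)) \<in> ruling_map tb g1 g2 \<phi> ` ({0<..<1} \<times> {0<..<tb})"
    unfolding graph ruled_surface_def .
  then obtain h s where hs: "h \<in> {0<..<1}" "s \<in> {0<..<tb}"
    "ruling_map tb g1 g2 \<phi> (h, s) = (u (y, t), y, t + 2 * y * u (y, t))" by auto
  from rho_eq[OF hs(2) hs(1) hs(3)] have "s \<in> J y" "u (y, t) = XX y s" "t + 2 * y * u (y, t) - 2 * y * u (y, t) = Tl y s"
    by auto
  then show ?thesis by auto
qed

lemma key_ord:
  assumes "s1 \<in> J y" "s2 \<in> J y" "s1 \<le> s2"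
  shows "\<bar>Tl y s1 - Tl y s2\<bar> \<le> 12 * \<bar>Tr y s1 - Tr y s2\<bar>"
proof -
  define DD where "DD = Tr y s2 - Tr y s1"
  define EE where "EE = Tl y s2 - Tl y s1"
  define SS where "SS = s2 - s1"
  have g: "SS / 4 \<le> DD" "\<bar>EE\<bar> \<le> 3 * SS"
    using glob_est[OF assms] unfolding DD_def EE_def SS_def by auto
  have "\<bar>Tl y s1 - Tl y s2\<bar> = \<bar>EE\<bar>" unfolding EE_def by (simp add: abs_minus_commute)
  also have "\<dots> \<le> 3 * SS" by (rule g(2))
  also have "\<dots> \<le> 12 * DD" using g(1) by linarith
  also have "\<dots> \<le> 12 * \<bar>DD\<bar>" by simp
  also have "\<dots> = 12 * \<bar>Tr y s1 - Tr y s2\<bar>" unfolding DD_def by (simp add: abs_minus_commute)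
  finally show ?thesis .
qed

lemma KEY:
  assumes "(y, t1) \<in> D" "(y, t2) \<in> D"
  shows "\<bar>t1 - t2\<bar> \<le> 12 * \<bar>(t1 + 4 * y * u (y, t1)) - (t2 + 4 * y * u (y, t2))\<bar>"
proof -
  obtain s1 where s1: "s1 \<in> J y" "u (y, t1) = XX y s1" "t1 = Tl y s1" using pt[OF assms(1)] by blast
  obtain s2 where s2: "s2 \<in> J y" "u (y, t2) = XX y s2" "t2 = Tl y s2" using pt[OF assms(2)] by blast
  have r1: "t1 + 4 * y * u (y, t1) = Tr y s1" unfolding Tr_def using s1 by simp
  have r2: "t2 + 4 * y * u (y, t2) = Tr y s2" unfolding Tr_def using s2 by simp
  have e1: "\<bar>t1 - t2\<bar> = \<bar>Tl y s1 - Tl y s2\<bar>" using s1(3) s2(3) by simp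
  have e2: "\<bar>(t1 + 4 * y * u (y, t1)) - (t2 + 4 * y * u (y, t2))\<bar> = \<bar>Tr y s1 - Tr y s2\<bar>" using r1 r2 by simp
  have "\<bar>Tl y s1 - Tl y s2\<bar> \<le> 12 * \<bar>Tr y s1 - Tr y s2\<bar>"
  proof (cases "s1 \<le> s2")
    case True
    show ?thesis using key_ord[OF s1(1) s2(1) True] .
  next
    case False
    then have "\<bar>Tl y s2 - Tl y s1\<bar> \<le> 12 * \<bar>Tr y s2 - Tr y s1\<bar>" using key_ord[OF s2(1) s1(1)] by simp
    then show ?thesis by (simp add: abs_minus_commute)
  qed
  then show ?thesis using e1 e2 by simp
qed

end


lemma dist_le_sum:
  fixes a b :: "real \<times> real"
  shows "dist a b \<le> \<bar>fst a - fst b\<bar> + \<bar>snd a - snd b\<bar>"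
  unfolding dist_prod_def dist_real_def
  using sqrt_sum_squares_le_sum_abs[of "\<bar>fst a - fst b\<bar>" "\<bar>snd a - snd b\<bar>"] by simp

context rs begin

definition Psi :: "real \<times> real \<Rightarrow> real \<times> real" where
  "Psi p = (fst p, snd p + 4 * fst p * u p)"

lemma D_open: "open D"
proof -
  have g1c: "continuous_on {0<..<tb} g1"
    using bound_lip_cont[OF g1L nn(2)] by (rule continuous_on_subset) auto
  have g2c: "continuous_on {0<..<tb} g2"
    using bound_lip_cont[OF g2L nn(2)] by (rule continuous_on_subset) auto
  define S where "S = (UNIV :: real set) \<times> {0<..<tb}"
  define f where "f = (\<lambda>p::real \<times> real. (fst p - g1 (snd p), g2 (snd p) - fst p))"
  have sS: "snd ` S \<subseteq> {0<..<tb}" unfolding S_def by auto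
  have c1: "continuous_on S (\<lambda>p. g1 (snd p))"
    by (rule continuous_on_compose2[OF g1c continuous_on_snd[OF continuous_on_id] sS])
  have c2: "continuous_on S (\<lambda>p. g2 (snd p))"
    by (rule continuous_on_compose2[OF g2c continuous_on_snd[OF continuous_on_id] sS])
  have cf: "continuous_on S f" unfolding f_def using c1 c2 by (intro continuous_intros) auto
  have oS: "open S" unfolding S_def by (intro open_Times) auto
  have oT: "open ({0<..} \<times> {0<..} :: (real \<times> real) set)" by (intro open_Times) auto
  have "D = S \<inter> f -` ({0<..} \<times> {0<..})"
    unfolding Ddef S_def f_def by auto
  then show ?thesis using continuous_open_preimage[OF cf oS oT] by simp
qed

lemma u_cont: "continuous_on D u" by (rule lipschitz_on_continuous_on[OF uL])

lemma Psi_cont: "continuous_on S Psi" if "S \<subseteq> D" for S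
proof -
  have "continuous_on S u" using u_cont that by (rule continuous_on_subset)
  then show ?thesis unfolding Psi_def by (intro continuous_intros) auto
qed

lemma Psi_inj: "inj_on Psi D"
proof (rule inj_onI)
  fix p q assume pq: "p \<in> D" "q \<in> D" "Psi p = Psi q"
  obtain y1 t1 where p: "p = (y1, t1)" by (cases p)
  obtain y2 t2 where q: "q = (y2, t2)" by (cases q)
  have y: "y1 = y2" and t: "t1 + 4 * y1 * u (y1, t1) = t2 + 4 * y2 * u (y2, t2)"
    using pq(3) unfolding p q Psi_def by auto
  have "\<bar>t1 - t2\<bar> \<le> 12 * \<bar>(t1 + 4 * y1 * u (y1, t1)) - (t2 + 4 * y1 * u (y1, t2))\<bar>"
    using KEY[of y1 t1 t2] pq(1,2) unfolding p q y by auto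
  then have "t1 = t2" using t y by simp
  then show "p = q" using p q y by simp
qed

definition Dr where "Dr = Psi ` D"
definition ur where "ur q = u (inv_into D Psi q)"

lemma Dr_open: "open Dr"
  unfolding Dr_def by (rule invariance_of_domain[OF Psi_cont[OF order_refl] D_open Psi_inj])

lemma ur_Psi: "p \<in> D \<Longrightarrow> ur (Psi p) = u p"
  unfolding ur_def using Psi_inj by simp

lemma graphs: "right_graph ur Dr = left_graph u D"
proof -
  have "right_graph ur Dr = (\<lambda>p. (\<lambda>(y, t). (ur (y, t), y, t - 2 * y * ur (y, t))) (Psi p)) ` D"
    unfolding right_graph_def Dr_def image_image ..
  also have "\<dots> = (\<lambda>(y, t). (u (y, t), y, t + 2 * y * u (y, t))) ` D"
  proof (rule image_cong[OF refl])
    fix p assume p: "p \<in> D"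
    obtain y t where pe: "p = (y, t)" by (cases p)
    have "ur (Psi p) = u p" by (rule ur_Psi[OF p])
    then show "(\<lambda>(y, t). (ur (y, t), y, t - 2 * y * ur (y, t))) (Psi p) = (\<lambda>(y, t). (u (y, t), y, t + 2 * y * u (y, t))) p"
      unfolding pe Psi_def by (simp add: algebra_simps)
  qed
  finally show ?thesis unfolding left_graph_def .
qed

lemma ur_loclip: "locally_lipschitz_on ur Dr"
  unfolding locally_lipschitz_on_def
proof
  fix q0 assume "q0 \<in> Dr"
  then obtain p0 where p0: "p0 \<in> D" "q0 = Psi p0" unfolding Dr_def by auto
  obtain r where r: "r > 0" "ball p0 r \<subseteq> D" using D_open p0(1) open_contains_ball by blast
  define e where "e = r / 2"
  obtain y0 t0 where p0e: "p0 = (y0, t0)" by (cases p0)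
  define B where "B = ball y0 e \<times> ball t0 e"
  have Bsub: "B \<subseteq> ball p0 r"
  proof
    fix p assume "p \<in> B"
    then have "\<bar>fst p - y0\<bar> < e" "\<bar>snd p - t0\<bar> < e" unfolding B_def by (auto simp: dist_real_def abs_minus_commute)
    then have "dist p p0 < r" using dist_le_sum[of p p0] unfolding p0e e_def by simp
    then show "p \<in> ball p0 r" by (simp add: dist_commute)
  qed
  then have BD: "B \<subseteq> D" using r by auto
  have oB: "open B" unfolding B_def by (intro open_Times) auto
  have p0B: "p0 \<in> B" unfolding B_def p0e using r by (simp add: e_def)
  have "open (Psi ` B)"
    by (rule invariance_of_domain[OF Psi_cont[OF BD] oB inj_on_subset[OF Psi_inj BD]])
  moreover have "q0 \<in> Psi ` B" using p0 p0B by auto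
  ultimately obtain e' where e': "e' > 0" "ball q0 e' \<subseteq> Psi ` B" using open_contains_ball by blast
  obtain L0' where "L0 = L0'" by simp
  have L0: "0 \<le> L0" using uL by (rule lipschitz_on_nonneg)
  define Y where "Y = \<bar>y0\<bar> + e"
  define M where "M = \<bar>u p0\<bar> + L0 * r"
  define K1 where "K1 = 4 * (Y * L0 + M)"
  have uLip: "\<bar>u p - u q\<bar> \<le> L0 * dist p q" if "p \<in> D" "q \<in> D" for p q
    using lipschitz_onD[OF uL that] by (simp add: dist_real_def)
  have Mb: "\<bar>u p\<bar> \<le> M" if "p \<in> B" for p
  proof -
    have "dist p p0 < r" using Bsub that by (auto simp: dist_commute)
    then have "L0 * dist p p0 \<le> L0 * r" using L0 by (intro mult_left_mono) auto
    moreover have "\<bar>u p - u p0\<bar> \<le> L0 * dist p p0" using uLip[of p p0] that BD p0 by auto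
    ultimately show ?thesis unfolding M_def by linarith
  qed
  have Yb: "\<bar>fst p\<bar> \<le> Y" if "p \<in> B" for p
    using that unfolding B_def Y_def by (auto simp: dist_real_def)
  have main: "\<bar>u p - u p'\<bar> \<le> L0 * (13 + 12 * K1) * dist (Psi p) (Psi p')" if pp: "p \<in> B" "p' \<in> B" for p p'
  proof -
    obtain y1 t1 where pe: "p = (y1, t1)" by (cases p)
    obtain y2 t2 where pe': "p' = (y2, t2)" by (cases p')
    define m where "m = (y2, t1)"
    have mB: "m \<in> B" using pp unfolding B_def m_def pe pe' by auto
    have inD: "p \<in> D" "p' \<in> D" "m \<in> D" using pp mB BD by auto
    define dy where "dy = \<bar>y1 - y2\<bar>"
    define dP where "dP = \<bar>snd (Psi p) - snd (Psi p')\<bar>"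
    have dy: "dy \<le> dist (Psi p) (Psi p')"
      using dist_fst_le[of "Psi p" "Psi p'"] unfolding dy_def Psi_def pe pe' by (simp add: dist_real_def)
    have dPb: "dP \<le> dist (Psi p) (Psi p')"
      using dist_snd_le[of "Psi p" "Psi p'"] unfolding dP_def by (simp add: dist_real_def)
    have k: "\<bar>t1 - t2\<bar> \<le> 12 * \<bar>(t1 + 4 * y2 * u (y2, t1)) - (t2 + 4 * y2 * u (y2, t2))\<bar>"
      using KEY[of y2 t1 t2] inD unfolding m_def pe' by auto
    have um: "\<bar>u m - u p\<bar> \<le> L0 * dy"
    proof -
      have "dist m p = \<bar>y2 - y1\<bar>" unfolding m_def pe by (simp add: dist_prod_def dist_real_def)
      then show ?thesis using uLip[of m p] inD unfolding dy_def by (simp add: abs_minus_commute)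
    qed
    have "\<bar>4 * y2 * (u m - u p)\<bar> \<le> (4 * Y) * (L0 * dy)"
    proof -
      have "\<bar>4 * y2\<bar> \<le> 4 * Y" using Yb[OF pp(2)] unfolding pe' by simp
      then show ?thesis using um by (rule abs_prod_le)
    qed
    moreover have "\<bar>4 * (y2 - y1) * u p\<bar> \<le> (4 * dy) * M"
    proof -
      have "\<bar>4 * (y2 - y1)\<bar> \<le> 4 * dy" unfolding dy_def abs_mult by (simp add: abs_minus_commute)
      then show ?thesis using Mb[OF pp(1)] by (rule abs_prod_le)
    qed
    moreover have "(4 * Y) * (L0 * dy) + (4 * dy) * M = K1 * dy" unfolding K1_def by (simp add: algebra_simps)
    moreover have "(t1 + 4 * y2 * u (y2, t1)) - (t2 + 4 * y2 * u (y2, t2))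
        = (snd (Psi p) - snd (Psi p')) + (4 * y2 * (u m - u p) + 4 * (y2 - y1) * u p)"
      unfolding Psi_def pe pe' m_def by (simp add: algebra_simps)
    ultimately have "\<bar>(t1 + 4 * y2 * u (y2, t1)) - (t2 + 4 * y2 * u (y2, t2))\<bar> \<le> dP + K1 * dy"
      unfolding dP_def by (smt (verit) abs_triangle_ineq)
    with k have tb: "\<bar>t1 - t2\<bar> \<le> 12 * dP + 12 * K1 * dy" by simp
    have "\<bar>u p - u p'\<bar> \<le> L0 * dist p p'" using uLip inD by auto
    also have "\<dots> \<le> L0 * (dy + \<bar>t1 - t2\<bar>)"
      using dist_le_sum[of p p'] L0 unfolding pe pe' dy_def by (intro mult_left_mono) auto
    also have "\<dots> \<le> L0 * (dy + 12 * dP + 12 * K1 * dy)" using tb L0 by (intro mult_left_mono) auto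
    also have "\<dots> \<le> L0 * ((13 + 12 * K1) * dist (Psi p) (Psi p'))"
    proof (intro mult_left_mono L0)
      have K1: "0 \<le> K1" unfolding K1_def Y_def M_def using L0 r e_def by auto
      have "12 * K1 * dy \<le> 12 * K1 * dist (Psi p) (Psi p')" using dy K1 by (intro mult_left_mono) auto
      then show "dy + 12 * dP + 12 * K1 * dy \<le> (13 + 12 * K1) * dist (Psi p) (Psi p')"
        using dy dPb by (simp add: algebra_simps)
    qed
    finally show ?thesis by (simp add: algebra_simps)
  qed
  show "\<exists>e>0. \<exists>L. L-lipschitz_on (ball q0 e \<inter> Dr) ur"
  proof (intro exI conjI)
    show "0 < e'" by (rule e'(1))
    show "(L0 * (13 + 12 * K1))-lipschitz_on (ball q0 e' \<inter> Dr) ur"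
    proof (rule lipschitz_onI)
      show "0 \<le> L0 * (13 + 12 * K1)" using L0 unfolding K1_def Y_def M_def using r e_def by auto
      fix q q' assume qq: "q \<in> ball q0 e' \<inter> Dr" "q' \<in> ball q0 e' \<inter> Dr"
      obtain p where p: "p \<in> B" "q = Psi p" using qq(1) e'(2) by auto
      obtain p' where p': "p' \<in> B" "q' = Psi p'" using qq(2) e'(2) by auto
      have "p \<in> D" "p' \<in> D" using p(1) p'(1) BD by auto
      then have "ur q = u p" "ur q' = u p'" using ur_Psi p(2) p'(2) by simp_all
      then show "dist (ur q) (ur q') \<le> L0 * (13 + 12 * K1) * dist q q'"
        using main[OF p(1) p'(1)] p(2) p'(2) by (simp add: dist_real_def)
    qed
  qed
qed

theorem result:
  "\<exists>Dr :: (real \<times> real) set. \<exists>ur :: real \<times> real \<Rightarrow> real.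
     open Dr \<and> locally_lipschitz_on ur Dr \<and> left_graph u D = right_graph ur Dr"
  using Dr_open ur_loclip graphs by metis

end


lemma sup_norm_bound:
  fixes f :: "real \<Rightarrow> real"
  assumes "L-lipschitz_on {0<..<T} f" "0 < T"
  shows "\<forall>x\<in>{0<..<T}. \<bar>f x\<bar> \<le> sup_norm f {0<..<T}"
proof
  fix x assume x: "x \<in> {0<..<T}"
  have m: "T / 2 \<in> {0<..<T}" using assms(2) by auto
  have bdd: "bdd_above ((\<lambda>x. \<bar>f x\<bar>) ` {0<..<T})"
  proof (rule bdd_aboveI2)
    fix z assume z: "z \<in> {0<..<T}"
    have "dist (f z) (f (T/2)) \<le> L * dist z (T/2)" by (rule lipschitz_onD[OF assms(1) z m])
    moreover have "L * dist z (T/2) \<le> L * T"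
      using lipschitz_on_nonneg[OF assms(1)] z m by (intro mult_left_mono) (auto simp: dist_real_def)
    ultimately show "\<bar>f z\<bar> \<le> \<bar>f (T/2)\<bar> + L * T" by (simp add: dist_real_def)
  qed
  show "\<bar>f x\<bar> \<le> sup_norm f {0<..<T}" unfolding sup_norm_def by (rule cSUP_upper[OF x bdd])
qed

lemma lip_const_bound:
  fixes f :: "real \<Rightarrow> real"
  assumes "L-lipschitz_on I f"
  shows "\<forall>x\<in>I. \<forall>y\<in>I. \<bar>f x - f y\<bar> \<le> lip_const f I * \<bar>x - y\<bar>"
proof (intro ballI)
  fix x y assume xy: "x \<in> I" "y \<in> I"
  show "\<bar>f x - f y\<bar> \<le> lip_const f I * \<bar>x - y\<bar>"
  proof (cases "x = y")
    case True then show ?thesis by simp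
  next
    case False
    define A where "A = {(x, y). x \<in> I \<and> y \<in> I \<and> x \<noteq> y}"
    define q where "q = (\<lambda>pq. \<bar>f (fst pq) - f (snd pq)\<bar> / \<bar>fst pq - snd pq\<bar>)"
    have bdd: "bdd_above (q ` A)"
    proof (rule bdd_aboveI2)
      fix pq assume "pq \<in> A"
      then obtain a b where ab: "pq = (a, b)" "a \<in> I" "b \<in> I" "a \<noteq> b" unfolding A_def by auto
      have "\<bar>f a - f b\<bar> \<le> L * \<bar>a - b\<bar>" using lipschitz_onD[OF assms ab(2,3)] by (simp add: dist_real_def)
      then show "q pq \<le> L" unfolding q_def ab using ab(4) by (simp add: divide_le_eq)
    qed
    have "(x, y) \<in> A" unfolding A_def using xy False by auto
    then have "q (x, y) \<le> lip_const f I" unfolding lip_const_def using cSUP_upper[OF _ bdd]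
      unfolding A_def q_def by auto
    then have "\<bar>f x - f y\<bar> / \<bar>x - y\<bar> \<le> lip_const f I" unfolding q_def by simp
    then show ?thesis using False by (simp add: divide_le_eq)
  qed
qed

lemma ext_lip:
  fixes f :: "real \<Rightarrow> real"
  assumes c: "continuous_on {0..T} f" and T: "0 < T"
    and b: "\<forall>x\<in>{0<..<T}. \<forall>y\<in>{0<..<T}. \<bar>f x - f y\<bar> \<le> C * \<bar>x - y\<bar>"
  shows "0 \<le> C" "\<forall>x\<in>{0..T}. \<forall>y\<in>{0..T}. \<bar>f x - f y\<bar> \<le> C * \<bar>x - y\<bar>"
proof -
  have "T/3 \<in> {0<..<T}" "2*T/3 \<in> {0<..<T}" using T by auto
  then have "\<bar>f (T/3) - f (2*T/3)\<bar> \<le> C * \<bar>T/3 - 2*T/3\<bar>" using b by blast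
  then have "0 \<le> C * \<bar>T/3 - 2*T/3\<bar>" by linarith
  moreover have "0 < \<bar>T/3 - 2*T/3\<bar>" using T by simp
  ultimately show C: "0 \<le> C" by (simp add: zero_le_mult_iff)
  have "C-lipschitz_on {0<..<T} f" using b C by (intro lipschitz_onI) (auto simp: dist_real_def)
  moreover have "continuous_on (closure {0<..<T}) f" using c T by simp
  ultimately have "C-lipschitz_on (closure {0<..<T}) f" by (rule lipschitz_on_closure)
  then have "C-lipschitz_on {0..T} f" using T by simp
  then show "\<forall>x\<in>{0..T}. \<forall>y\<in>{0..T}. \<bar>f x - f y\<bar> \<le> C * \<bar>x - y\<bar>"
    using lipschitz_onD by (fastforce simp: dist_real_def)
qed

lemma ext_bound:
  fixes f :: "real \<Rightarrow> real"
  assumes c: "continuous_on {0..T} f" and T: "0 < T" and b: "\<forall>x\<in>{0<..<T}. \<bar>f x\<bar> \<le> M"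
  shows "\<forall>x\<in>{0..T}. \<bar>f x\<bar> \<le> M"
proof -
  have "f ` closure {0<..<T} \<subseteq> cball 0 M"
  proof (rule image_closure_subset)
    show "continuous_on (closure {0<..<T}) f" using c T by simp
    show "closed (cball (0::real) M)" by simp
    show "f ` {0<..<T} \<subseteq> cball 0 M" using b by (auto simp: dist_real_def)
  qed
  then show ?thesis using T by (auto simp: dist_real_def)
qed

lemma D_open_gen:
  fixes g1 g2 :: "real \<Rightarrow> real"
  assumes g1c: "continuous_on {0..T} g1" and g2c: "continuous_on {0..T} g2"
  shows "open {(y,t). t \<in> {0<..<T} \<and> g1 t < y \<and> y < g2 t}"
proof -
  have g1c: "continuous_on {0<..<T} g1" using g1c by (rule continuous_on_subset) auto
  have g2c: "continuous_on {0<..<T} g2" using g2c by (rule continuous_on_subset) auto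
  define S where "S = (UNIV :: real set) \<times> {0<..<T}"
  define f where "f = (\<lambda>p::real \<times> real. (fst p - g1 (snd p), g2 (snd p) - fst p))"
  have sS: "snd ` S \<subseteq> {0<..<T}" unfolding S_def by auto
  have c1: "continuous_on S (\<lambda>p. g1 (snd p))"
    by (rule continuous_on_compose2[OF g1c continuous_on_snd[OF continuous_on_id] sS])
  have c2: "continuous_on S (\<lambda>p. g2 (snd p))"
    by (rule continuous_on_compose2[OF g2c continuous_on_snd[OF continuous_on_id] sS])
  have cf: "continuous_on S f" unfolding f_def using c1 c2 by (intro continuous_intros) auto
  have oS: "open S" unfolding S_def by (intro open_Times) auto
  have oT: "open ({0<..} \<times> {0<..} :: (real \<times> real) set)" by (intro open_Times) auto
  have "{(y,t). t \<in> {0<..<T} \<and> g1 t < y \<and> y < g2 t} = S \<inter> f -` ({0<..} \<times> {0<..})"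
    unfolding S_def f_def by auto
  then show ?thesis using continuous_open_preimage[OF cf oS oT] by simp
qed

lemma curves_frontier:
  fixes g1 g2 :: "real \<Rightarrow> real"
  assumes T: "0 < T" and g1c: "continuous_on {0..T} g1" and g2c: "continuous_on {0..T} g2"
    and sign: "\<forall>t\<in>{0<..<T}. g1 t < 0 \<and> 0 < g2 t"
    and Dd: "D = {(y,t). t \<in> {0<..<T} \<and> g1 t < y \<and> y < g2 t}"
  shows "\<forall>l\<in>{0..T}. (g1 l, l) \<in> frontier D" "\<forall>l\<in>{0..T}. (g2 l, l) \<in> frontier D"
proof -
  have oD: "open D" unfolding Dd by (rule D_open_gen[OF g1c g2c])
  have fr: "frontier D = closure D - D" unfolding frontier_def interior_open[OF oD] ..
  have in1: "(g1 l, l) \<in> closure D" if l: "l \<in> {0<..<T}" for l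
  proof -
    define del where "del = g2 l - g1 l"
    have dp: "0 < del" unfolding del_def using sign l by force
    define h where "h = (\<lambda>e::real. (g1 l + e, l))"
    have "h ` closure {0<..<del} \<subseteq> closure D"
    proof (rule image_closure_subset)
      show "continuous_on (closure {0<..<del}) h" unfolding h_def by (intro continuous_intros)
      show "closed (closure D)" by simp
      show "h ` {0<..<del} \<subseteq> closure D"
      proof
        fix z assume "z \<in> h ` {0<..<del}"
        then obtain e where e: "0 < e" "e < del" "z = h e" by auto
        have "z \<in> D" unfolding Dd e(3) h_def using e l unfolding del_def by auto
        then show "z \<in> closure D" using closure_subset by blast
      qed
    qed
    moreover have "0 \<in> closure {0<..<del}" using dp by simp
    ultimately show ?thesis unfolding h_def by auto
  qed
  have in2: "(g2 l, l) \<in> closure D" if l: "l \<in> {0<..<T}" for l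
  proof -
    define del where "del = g2 l - g1 l"
    have dp: "0 < del" unfolding del_def using sign l by force
    define h where "h = (\<lambda>e::real. (g2 l - e, l))"
    have "h ` closure {0<..<del} \<subseteq> closure D"
    proof (rule image_closure_subset)
      show "continuous_on (closure {0<..<del}) h" unfolding h_def by (intro continuous_intros)
      show "closed (closure D)" by simp
      show "h ` {0<..<del} \<subseteq> closure D"
      proof
        fix z assume "z \<in> h ` {0<..<del}"
        then obtain e where e: "0 < e" "e < del" "z = h e" by auto
        have "z \<in> D" unfolding Dd e(3) h_def using e l unfolding del_def by auto
        then show "z \<in> closure D" using closure_subset by blast
      qed
    qed
    moreover have "0 \<in> closure {0<..<del}" using dp by simp
    ultimately show ?thesis unfolding h_def by auto
  qed
  have c1: "(\<lambda>l. (g1 l, l)) ` closure {0<..<T} \<subseteq> closure D"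
  proof (rule image_closure_subset)
    show "continuous_on (closure {0<..<T}) (\<lambda>l. (g1 l, l))" using g1c T by (intro continuous_intros) auto
  qed (use in1 in auto)
  have c2: "(\<lambda>l. (g2 l, l)) ` closure {0<..<T} \<subseteq> closure D"
  proof (rule image_closure_subset)
    show "continuous_on (closure {0<..<T}) (\<lambda>l. (g2 l, l))" using g2c T by (intro continuous_intros) auto
  qed (use in2 in auto)
  have n1: "(g1 l, l) \<notin> D" for l unfolding Dd by auto
  have n2: "(g2 l, l) \<notin> D" for l unfolding Dd by auto
  show "\<forall>l\<in>{0..T}. (g1 l, l) \<in> frontier D" using c1 n1 T unfolding fr by auto
  show "\<forall>l\<in>{0..T}. (g2 l, l) \<in> frontier D" using c2 n2 T unfolding fr by auto
qed

lemma sqrt_bound: "(sqrt 721 - 25) / 48 \<le> (1/24 :: real)"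
proof -
  have a: "sqrt (721::real) < sqrt 729" by (simp only: real_sqrt_less_iff)
  have b: "sqrt (729::real) = 27" by simp
  show ?thesis using a b by simp
qed

theorem proposition1p2:
  fixes tbar :: real and \<gamma>1 \<gamma>2 :: "real \<Rightarrow> real"
    and \<phi> u :: "real \<times> real \<Rightarrow> real" and D :: "(real \<times> real) set"
  assumes tbar: "tbar > 0"
    and g1_lip: "\<exists>L. L-lipschitz_on {0<..<tbar} \<gamma>1"
    and g2_lip: "\<exists>L. L-lipschitz_on {0<..<tbar} \<gamma>2"
    and g1_cont: "continuous_on {0..tbar} \<gamma>1"
    and g2_cont: "continuous_on {0..tbar} \<gamma>2"
    and g_sign: "\<forall>t\<in>{0<..<tbar}. \<gamma>1 t < 0 \<and> 0 < \<gamma>2 t"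
    and g_ends: "\<gamma>1 0 = 0" "\<gamma>1 tbar = 0" "\<gamma>2 0 = 0" "\<gamma>2 tbar = 0"
    and g1_convex: "convex_on {0<..<tbar} \<gamma>1"
    and g2_concave: "concave_on {0<..<tbar} \<gamma>2"
    and D_def: "D = {(y,t). t \<in> {0<..<tbar} \<and> \<gamma>1 t < y \<and> y < \<gamma>2 t}"
    and phi_cont: "continuous_on (frontier D) \<phi>"
    and phi1_lip: "\<exists>L. L-lipschitz_on {0<..<tbar} (bdry_fun \<phi> \<gamma>1)"
    and phi2_lip: "\<exists>L. L-lipschitz_on {0<..<tbar} (bdry_fun \<phi> \<gamma>2)"
    and zeta_small: "zeta {0<..<tbar} \<gamma>1 \<gamma>2 \<phi> < (sqrt 721 - 25) / 48"
    and u_lip: "\<exists>L. L-lipschitz_on D u"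
    and u_cont: "continuous_on (closure D) u"
    and u_bdry: "\<forall>p\<in>frontier D. u p = \<phi> p"
    and graph_eq: "left_graph u D = ruled_surface tbar \<gamma>1 \<gamma>2 \<phi>"
  shows "\<exists>Dr :: (real \<times> real) set. \<exists>ur :: real \<times> real \<Rightarrow> real.
           open Dr \<and> locally_lipschitz_on ur Dr \<and> left_graph u D = right_graph ur Dr"
proof -
  define I where "I = {0<..<tbar}"
  obtain L where uL: "L-lipschitz_on D u" using u_lip by blast
  obtain La where La: "La-lipschitz_on I \<gamma>1" using g1_lip unfolding I_def by blast
  obtain Lb where Lb: "Lb-lipschitz_on I \<gamma>2" using g2_lip unfolding I_def by blast
  obtain Lc where Lc: "Lc-lipschitz_on I (bdry_fun \<phi> \<gamma>1)" using phi1_lip unfolding I_def by blast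
  obtain Ld where Ld: "Ld-lipschitz_on I (bdry_fun \<phi> \<gamma>2)" using phi2_lip unfolding I_def by blast
  have fr: "\<forall>l\<in>{0..tbar}. (\<gamma>1 l, l) \<in> frontier D" "\<forall>l\<in>{0..tbar}. (\<gamma>2 l, l) \<in> frontier D"
    using curves_frontier[OF tbar g1_cont g2_cont g_sign D_def] by auto
  have p1c: "continuous_on {0..tbar} (bdry_fun \<phi> \<gamma>1)"
  proof -
    have "continuous_on {0..tbar} (\<lambda>l. (\<gamma>1 l, l))" using g1_cont by (intro continuous_intros) auto
    moreover have "(\<lambda>l. (\<gamma>1 l, l)) ` {0..tbar} \<subseteq> frontier D" using fr(1) by auto
    ultimately show ?thesis unfolding bdry_fun_def by (rule continuous_on_compose2[OF phi_cont])
  qed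
  have p2c: "continuous_on {0..tbar} (bdry_fun \<phi> \<gamma>2)"
  proof -
    have "continuous_on {0..tbar} (\<lambda>l. (\<gamma>2 l, l))" using g2_cont by (intro continuous_intros) auto
    moreover have "(\<lambda>l. (\<gamma>2 l, l)) ` {0..tbar} \<subseteq> frontier D" using fr(2) by auto
    ultimately show ?thesis unfolding bdry_fun_def by (rule continuous_on_compose2[OF phi_cont])
  qed
  define Gm where "Gm = max (sup_norm \<gamma>1 I) (sup_norm \<gamma>2 I)"
  define Lg where "Lg = max (lip_const \<gamma>1 I) (lip_const \<gamma>2 I)"
  define Ph where "Ph = max (sup_norm (bdry_fun \<phi> \<gamma>1) I) (sup_norm (bdry_fun \<phi> \<gamma>2) I)"
  define Lp where "Lp = max (lip_const (bdry_fun \<phi> \<gamma>1) I) (lip_const (bdry_fun \<phi> \<gamma>2) I)"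
  have zeq: "zeta {0<..<tbar} \<gamma>1 \<gamma>2 \<phi> = 4 * ((Gm + Lg) * (Ph + Lp))"
    unfolding zeta_def Gm_def Lg_def Ph_def Lp_def I_def by simp
  have sb1: "\<forall>x\<in>I. \<bar>\<gamma>1 x\<bar> \<le> Gm" using sup_norm_bound[OF La[unfolded I_def] tbar] unfolding Gm_def I_def by force
  have sb2: "\<forall>x\<in>I. \<bar>\<gamma>2 x\<bar> \<le> Gm" using sup_norm_bound[OF Lb[unfolded I_def] tbar] unfolding Gm_def I_def by force
  have sb3: "\<forall>x\<in>I. \<bar>bdry_fun \<phi> \<gamma>1 x\<bar> \<le> Ph" using sup_norm_bound[OF Lc[unfolded I_def] tbar] unfolding Ph_def I_def by force
  have sb4: "\<forall>x\<in>I. \<bar>bdry_fun \<phi> \<gamma>2 x\<bar> \<le> Ph" using sup_norm_bound[OF Ld[unfolded I_def] tbar] unfolding Ph_def I_def by force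
  have lb1: "\<forall>x\<in>I. \<forall>y\<in>I. \<bar>\<gamma>1 x - \<gamma>1 y\<bar> \<le> Lg * \<bar>x - y\<bar>"
  proof (intro ballI)
    fix x y assume "x \<in> I" "y \<in> I"
    then have "\<bar>\<gamma>1 x - \<gamma>1 y\<bar> \<le> lip_const \<gamma>1 I * \<bar>x - y\<bar>" using lip_const_bound[OF La] by blast
    also have "\<dots> \<le> Lg * \<bar>x - y\<bar>" unfolding Lg_def by (intro mult_right_mono) auto
    finally show "\<bar>\<gamma>1 x - \<gamma>1 y\<bar> \<le> Lg * \<bar>x - y\<bar>" .
  qed
  have lb2: "\<forall>x\<in>I. \<forall>y\<in>I. \<bar>\<gamma>2 x - \<gamma>2 y\<bar> \<le> Lg * \<bar>x - y\<bar>"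
  proof (intro ballI)
    fix x y assume "x \<in> I" "y \<in> I"
    then have "\<bar>\<gamma>2 x - \<gamma>2 y\<bar> \<le> lip_const \<gamma>2 I * \<bar>x - y\<bar>" using lip_const_bound[OF Lb] by blast
    also have "\<dots> \<le> Lg * \<bar>x - y\<bar>" unfolding Lg_def by (intro mult_right_mono) auto
    finally show "\<bar>\<gamma>2 x - \<gamma>2 y\<bar> \<le> Lg * \<bar>x - y\<bar>" .
  qed
  have lb3: "\<forall>x\<in>I. \<forall>y\<in>I. \<bar>bdry_fun \<phi> \<gamma>1 x - bdry_fun \<phi> \<gamma>1 y\<bar> \<le> Lp * \<bar>x - y\<bar>"
  proof (intro ballI)
    fix x y assume "x \<in> I" "y \<in> I"
    then have "\<bar>bdry_fun \<phi> \<gamma>1 x - bdry_fun \<phi> \<gamma>1 y\<bar> \<le> lip_const (bdry_fun \<phi> \<gamma>1) I * \<bar>x - y\<bar>"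
      using lip_const_bound[OF Lc] by blast
    also have "\<dots> \<le> Lp * \<bar>x - y\<bar>" unfolding Lp_def by (intro mult_right_mono) auto
    finally show "\<bar>bdry_fun \<phi> \<gamma>1 x - bdry_fun \<phi> \<gamma>1 y\<bar> \<le> Lp * \<bar>x - y\<bar>" .
  qed
  have lb4: "\<forall>x\<in>I. \<forall>y\<in>I. \<bar>bdry_fun \<phi> \<gamma>2 x - bdry_fun \<phi> \<gamma>2 y\<bar> \<le> Lp * \<bar>x - y\<bar>"
  proof (intro ballI)
    fix x y assume "x \<in> I" "y \<in> I"
    then have "\<bar>bdry_fun \<phi> \<gamma>2 x - bdry_fun \<phi> \<gamma>2 y\<bar> \<le> lip_const (bdry_fun \<phi> \<gamma>2) I * \<bar>x - y\<bar>"
      using lip_const_bound[OF Ld] by blast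
    also have "\<dots> \<le> Lp * \<bar>x - y\<bar>" unfolding Lp_def by (intro mult_right_mono) auto
    finally show "\<bar>bdry_fun \<phi> \<gamma>2 x - bdry_fun \<phi> \<gamma>2 y\<bar> \<le> Lp * \<bar>x - y\<bar>" .
  qed
  note e1 = ext_lip[OF g1_cont tbar lb1[unfolded I_def]]
  note e2 = ext_lip[OF g2_cont tbar lb2[unfolded I_def]]
  note e3 = ext_lip[OF p1c tbar lb3[unfolded I_def]]
  note e4 = ext_lip[OF p2c tbar lb4[unfolded I_def]]
  note b1 = ext_bound[OF g1_cont tbar sb1[unfolded I_def]]
  note b2 = ext_bound[OF g2_cont tbar sb2[unfolded I_def]]
  note b3 = ext_bound[OF p1c tbar sb3[unfolded I_def]]
  note b4 = ext_bound[OF p2c tbar sb4[unfolded I_def]]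
  have Gm0: "0 \<le> Gm" using b1 tbar by force
  have Ph0: "0 \<le> Ph" using b3 tbar by force
  have sm: "(Gm + Lg) * (Ph + Lp) \<le> 1/96"
    using zeta_small sqrt_bound zeq by linarith
  have R: "rs tbar \<gamma>1 \<gamma>2 \<phi> u D Gm Lg Ph Lp L"
    by (unfold rs_def; intro conjI; (fact tbar g_sign g_ends g1_convex g2_concave D_def e1(2) e2(2) e3(2) e4(2)
        b1 b2 b3 b4 Gm0 e1(1) Ph0 e3(1) sm uL graph_eq)?)
  show ?thesis using rs.result[OF R] .
qed


end
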